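(* In $(\lambda^2\beta\eta\pi* )'$, let $\varphi$ be a type, $\vec X=X_1,\ldots,X_m$ distinct type variables containing all free type variables of $\varphi$, $\vec\psi=\psi_1,\ldots,\psi_m$ types, and $\vec{\mathcal R}=\mathcal R_1,\ldots,\mathcal R_m$ RCs of types $\psi_1,\ldots,\psi_m$ respectively. Then $\mathsf{RED}_\varphi[\vec X:=\vec{\mathcal R}]$ is an RC of type $\varphi[\vec X:=\vec\psi]$.
   Context: System $(\lambda^2\beta\eta\pi* )'$. Types are generated from type variables $X,Y,\ldots$ and a type constant $\top$ by $\varphi\times\psi$, $\varphi\to\psi$ and $\forall X.\varphi$. Terms are Church-style typed: the constant $*^\top$, variables $x^\varphi$, $\lambda x^\varphi.t$, application $uv$, pairs $\langle u,v\rangle$, projections $\pi_1t,\pi_2t$, universal abstraction $(\Lambda X.v^\varphi)^{\forall X.\varphi}$ (allowed only when $X$ is not free in the type of any free variable of $v$), and universal application $(t^{\forall X.\varphi}\psi)^{\varphi[X:=\psi]}$. Terms are identified up to renaming of bound variables ($\equiv$); $\mathrm{FV}$, $\mathrm{FTV}$ denote free term / type variables. $\mathit{Iso}(\top)$ is the least set of types with $\top\in\mathit{Iso}(\top)$, $\varphi\to\tau$, $\forall X.\tau\in\mathit{Iso}(\top)$ if $\tau\in\mathit{Iso}(\top)$, $\tau_1\times\tau_2\in\mathit{Iso}(\top)$ if $\tau_1,\tau_2\in\mathit{Iso}(\top)$. For $\tau\in\mathit{Iso}(\top)$: $*^\top$ is the constant, $*^{\varphi\to\tau}:=\lambda x^\varphi.*^\tau$,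 $*^{\tau_1\times\tau_2}:=\langle *^{\tau_1},*^{\tau_2}\rangle$, $*^{\forall X.\tau}:=\Lambda X.*^\tau$. The one-step relation $\to$ is the closure under all contexts of: $(\beta)$ $(\lambda x.u)v\to u[x:=v]$; $\pi_1\langle u,v\rangle\to u$, $\pi_2\langle u,v\rangle\to v$; $(\eta)$ $\lambda x.tx\to t$ ($x\notin\mathrm{FV}(t)$); $(SP)$ $\langle\pi_1u,\pi_2u\rangle\to u$; (gentop) $u^\tau\to *^\tau$ ($\tau\in\mathit{Iso}(\top)$, $u\not\equiv *^\tau$); $(\eta_{top})$ $\lambda x^\tau.t\,*^\tau\to t$ ($x\notin\mathrm{FV}(t)$, $\tau\in\mathit{Iso}(\top)$); $\langle\pi_1u,*^\tau\rangle\to u$ ($u:\varphi\times\tau$, $\tau\in\mathit{Iso}(\top)$); $\langle *^\tau,\pi_2u\rangle\to u$ ($u:\tau\times\psi$, $\tau\in\mathit{Iso}(\top)$); $(\beta^2)$ $(\Lambda X.t)\varphi\to t[X:=\varphi]$; $(\eta^2)$ $\Lambda X.sX\to s$ ($X\notin\mathrm{FTV}(s)$). A term is SN if no infinite $\to$-sequence starts from it; $\mathcal{SN}^\psi$ is the set of SN terms of type $\psi$. A term is neutral if it is not of the form $\langle u,v\rangle$, $\lambda x.v$ or $\Lambda X.u$. For a term $t$ and a variable $z^\top$, $t[*^\top:=z^\top]$ replaces every occurrence of the constant $*^\top$ in $t$ by $z^\top$; a set $A$ of terms is variant-closed if $t[*^\top:=z^\top]\in A$ for every $t\in A$ and every variable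 $z^\top$ not occurring in $t$. A reducibility candidate (RC) of type $\varphi$ is a set $\mathcal{R}$ of terms of type $\varphi$ such that: (CR0) if $\varphi\in\mathit{Iso}(\top)$ then $*^\varphi\in\mathcal{R}$, and $\mathcal{R}$ is variant-closed; (CR1) every $t\in\mathcal{R}$ is SN; (CR2) $t\in\mathcal{R}$, $t\to t'$ imply $t'\in\mathcal{R}$; (CR3) if $t$ of type $\varphi$ is neutral and every one-step reduct of $t$ is in $\mathcal{R}$, then $t\in\mathcal{R}$. For RCs $\mathcal{R}_i$ of type $\varphi_i$: $\mathcal{R}_1\times\mathcal{R}_2=\{t^{\varphi_1\times\varphi_2}\mid \pi_it\in\mathcal{R}_i, i=1,2\}$ and $\mathcal{R}_1\to\mathcal{R}_2=\{t^{\varphi_1\to\varphi_2}\mid \forall u\in\mathcal{R}_1,\ tu\in\mathcal{R}_2\}$. Given a type $\varphi$, distinct type variables $\vec X=X_1,\ldots,X_m$ containing the free type variables of $\varphi$, types $\vec\psi=\psi_1,\ldots,\psi_m$ and RCs $\vec{\mathcal{R}}=\mathcal{R}_1,\ldots,\mathcal{R}_m$ of types $\vec\psi$, the set $\mathsf{RED}_\varphi[\vec X:=\vec{\mathcal{R}}]$ of terms of type $\varphi[\vec X:=\vec\psi]$ is defined by induction on $\varphi$: $\mathsf{RED}_\top[\vec X:=\vec{\mathcal R}]=\mathcal{SN}^\top$; $\mathsf{RED}_{X_i}[\vec X:=\vec{\mathcal R}]=\mathcal{R}_i$; $\mathsf{RED}_{\varphi'\circ\varphi''}[\vec X:=\vec{\mathcal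 R}]=\mathsf{RED}_{\varphi'}[\vec X:=\vec{\mathcal R}]\circ\mathsf{RED}_{\varphi''}[\vec X:=\vec{\mathcal R}]$ for $\circ\in\{\to,\times\}$; for $\varphi=\forall Y.\varphi'$ (with $Y$ distinct from all $X_i$ and not free in $\vec\psi$), $\mathsf{RED}_\varphi[\vec X:=\vec{\mathcal R}]$ is the set of terms $t$ of type $(\forall Y.\varphi')[\vec X:=\vec\psi]$ such that for every type $\psi$ and every RC $\mathcal{S}$ of type $\psi$, $t\psi\in\mathsf{RED}_{\varphi'}[\vec X,Y:=\vec{\mathcal R},\mathcal{S}]$. *)

theory Defs
  imports Main
begin

section \<open>Types (locally nameless: free type variables named, bound ones de Bruijn)\<close>

datatype ty = TFree nat | TBound nat | Top | Prod ty ty | Arr ty ty | All ty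

fun lc_ty_at :: "nat \<Rightarrow> ty \<Rightarrow> bool" where
  "lc_ty_at k (TFree X) = True"
| "lc_ty_at k (TBound i) = (i < k)"
| "lc_ty_at k Top = True"
| "lc_ty_at k (Prod a b) = (lc_ty_at k a \<and> lc_ty_at k b)"
| "lc_ty_at k (Arr a b) = (lc_ty_at k a \<and> lc_ty_at k b)"
| "lc_ty_at k (All a) = lc_ty_at (Suc k) a"

abbreviation is_type :: "ty \<Rightarrow> bool" where "is_type a \<equiv> lc_ty_at 0 a"

fun ftv :: "ty \<Rightarrow> nat set" where
  "ftv (TFree X) = {X}"
| "ftv (TBound i) = {}"
| "ftv Top = {}"
| "ftv (Prod a b) = ftv a \<union> ftv b"
| "ftv (Arr a b) = ftv a \<union> ftv b"
| "ftv (All a) = ftv a"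

fun topen_at :: "nat \<Rightarrow> ty \<Rightarrow> ty \<Rightarrow> ty" where
  "topen_at k U (TFree X) = TFree X"
| "topen_at k U (TBound i) = (if i = k then U else TBound i)"
| "topen_at k U Top = Top"
| "topen_at k U (Prod a b) = Prod (topen_at k U a) (topen_at k U b)"
| "topen_at k U (Arr a b) = Arr (topen_at k U a) (topen_at k U b)"
| "topen_at k U (All a) = All (topen_at (Suc k) U a)"

text \<open>Substitution for free type variables (applied to locally closed types).\<close>
fun tsubst :: "(nat \<Rightarrow> ty option) \<Rightarrow> ty \<Rightarrow> ty" where
  "tsubst s (TFree X) = (case s X of None \<Rightarrow> TFree X | Some a \<Rightarrow> a)"
| "tsubst s (TBound i) = TBound i"
| "tsubst s Top = Top"
| "tsubst s (Prod a b) = Prod (tsubst s a) (tsubst s b)"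
| "tsubst s (Arr a b) = Arr (tsubst s a) (tsubst s b)"
| "tsubst s (All a) = All (tsubst s a)"

definition simsubst :: "nat list \<Rightarrow> ty list \<Rightarrow> ty \<Rightarrow> ty" where
  "simsubst Xs ps a = tsubst (map_of (zip Xs ps)) a"

fun iso :: "ty \<Rightarrow> bool" where
  "iso Top = True"
| "iso (Arr a t) = iso t"
| "iso (Prod a b) = (iso a \<and> iso b)"
| "iso (All t) = iso t"
| "iso (TFree X) = False"
| "iso (TBound i) = False"

section \<open>Church-style terms (locally nameless)\<close>

text \<open>FVar x a is the free variable x^a; BVar are de Bruijn indices for term binders;
  type annotations use TBound for type variables bound by enclosing TLam.\<close>
datatype tm = Star | FVar nat ty | BVar nat | Lam ty tm | App tm tm | Pair tm tm
  | Proj1 tm | Proj2 tm | TLam tm | TApp tm ty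

fun star_of :: "ty \<Rightarrow> tm" where
  "star_of Top = Star"
| "star_of (Arr a t) = Lam a (star_of t)"
| "star_of (Prod a b) = Pair (star_of a) (star_of b)"
| "star_of (All t) = TLam (star_of t)"
| "star_of (TFree X) = Star"
| "star_of (TBound i) = Star"

fun opn :: "nat \<Rightarrow> tm \<Rightarrow> tm \<Rightarrow> tm" where
  "opn k u Star = Star"
| "opn k u (FVar x a) = FVar x a"
| "opn k u (BVar i) = (if i = k then u else BVar i)"
| "opn k u (Lam a t) = Lam a (opn (Suc k) u t)"
| "opn k u (App t s) = App (opn k u t) (opn k u s)"
| "opn k u (Pair t s) = Pair (opn k u t) (opn k u s)"
| "opn k u (Proj1 t) = Proj1 (opn k u t)"
| "opn k u (Proj2 t) = Proj2 (opn k u t)"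
| "opn k u (TLam t) = TLam (opn k u t)"
| "opn k u (TApp t a) = TApp (opn k u t) a"

text \<open>Opening a type binder inside a term (annotations of free variables are untouched:
  they must be closed types).\<close>
fun topn :: "nat \<Rightarrow> ty \<Rightarrow> tm \<Rightarrow> tm" where
  "topn k U Star = Star"
| "topn k U (FVar x a) = FVar x a"
| "topn k U (BVar i) = BVar i"
| "topn k U (Lam a t) = Lam (topen_at k U a) (topn k U t)"
| "topn k U (App t s) = App (topn k U t) (topn k U s)"
| "topn k U (Pair t s) = Pair (topn k U t) (topn k U s)"
| "topn k U (Proj1 t) = Proj1 (topn k U t)"
| "topn k U (Proj2 t) = Proj2 (topn k U t)"
| "topn k U (TLam t) = TLam (topn (Suc k) U t)"
| "topn k U (TApp t a) = TApp (topn k U t) (topen_at k U a)"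

fun fvars :: "tm \<Rightarrow> (nat \<times> ty) set" where
  "fvars Star = {}"
| "fvars (FVar x a) = {(x, a)}"
| "fvars (BVar i) = {}"
| "fvars (Lam a t) = fvars t"
| "fvars (App t s) = fvars t \<union> fvars s"
| "fvars (Pair t s) = fvars t \<union> fvars s"
| "fvars (Proj1 t) = fvars t"
| "fvars (Proj2 t) = fvars t"
| "fvars (TLam t) = fvars t"
| "fvars (TApp t a) = fvars t"

fun ftv_tm :: "tm \<Rightarrow> nat set" where
  "ftv_tm Star = {}"
| "ftv_tm (FVar x a) = ftv a"
| "ftv_tm (BVar i) = {}"
| "ftv_tm (Lam a t) = ftv a \<union> ftv_tm t"
| "ftv_tm (App t s) = ftv_tm t \<union> ftv_tm s"
| "ftv_tm (Pair t s) = ftv_tm t \<union> ftv_tm s"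
| "ftv_tm (Proj1 t) = ftv_tm t"
| "ftv_tm (Proj2 t) = ftv_tm t"
| "ftv_tm (TLam t) = ftv_tm t"
| "ftv_tm (TApp t a) = ftv a \<union> ftv_tm t"

fun bvc_at :: "nat \<Rightarrow> tm \<Rightarrow> bool" where
  "bvc_at k Star = True"
| "bvc_at k (FVar x a) = True"
| "bvc_at k (BVar i) = (i < k)"
| "bvc_at k (Lam a t) = bvc_at (Suc k) t"
| "bvc_at k (App t s) = (bvc_at k t \<and> bvc_at k s)"
| "bvc_at k (Pair t s) = (bvc_at k t \<and> bvc_at k s)"
| "bvc_at k (Proj1 t) = bvc_at k t"
| "bvc_at k (Proj2 t) = bvc_at k t"
| "bvc_at k (TLam t) = bvc_at k t"
| "bvc_at k (TApp t a) = bvc_at k t"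

fun tyc_at :: "nat \<Rightarrow> tm \<Rightarrow> bool" where
  "tyc_at k Star = True"
| "tyc_at k (FVar x a) = lc_ty_at 0 a"
| "tyc_at k (BVar i) = True"
| "tyc_at k (Lam a t) = (lc_ty_at k a \<and> tyc_at k t)"
| "tyc_at k (App t s) = (tyc_at k t \<and> tyc_at k s)"
| "tyc_at k (Pair t s) = (tyc_at k t \<and> tyc_at k s)"
| "tyc_at k (Proj1 t) = tyc_at k t"
| "tyc_at k (Proj2 t) = tyc_at k t"
| "tyc_at k (TLam t) = tyc_at (Suc k) t"
| "tyc_at k (TApp t a) = (lc_ty_at k a \<and> tyc_at k t)"

inductive has_ty :: "tm \<Rightarrow> ty \<Rightarrow> bool" where
  ty_Star: "has_ty Star Top"
| ty_FVar: "is_type a \<Longrightarrow> has_ty (FVar x a) a"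
| ty_Lam: "is_type a \<Longrightarrow> (\<And>x. x \<notin> fst ` fvars t \<Longrightarrow> has_ty (opn 0 (FVar x a) t) b)
           \<Longrightarrow> has_ty (Lam a t) (Arr a b)"
| ty_App: "has_ty t (Arr a b) \<Longrightarrow> has_ty u a \<Longrightarrow> has_ty (App t u) b"
| ty_Pair: "has_ty t a \<Longrightarrow> has_ty u b \<Longrightarrow> has_ty (Pair t u) (Prod a b)"
| ty_Proj1: "has_ty t (Prod a b) \<Longrightarrow> has_ty (Proj1 t) a"
| ty_Proj2: "has_ty t (Prod a b) \<Longrightarrow> has_ty (Proj2 t) b"
| ty_TLam: "(\<And>X. X \<notin> ftv_tm t \<union> ftv b \<Longrightarrow>
              has_ty (topn 0 (TFree X) t) (topen_at 0 (TFree X) b))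
           \<Longrightarrow> has_ty (TLam t) (All b)"
| ty_TApp: "has_ty t (All b) \<Longrightarrow> is_type U \<Longrightarrow> has_ty (TApp t U) (topen_at 0 U b)"

inductive red :: "tm \<Rightarrow> tm \<Rightarrow> bool" where
  beta: "red (App (Lam a t) v) (opn 0 v t)"
| proj1: "red (Proj1 (Pair u v)) u"
| proj2: "red (Proj2 (Pair u v)) v"
| eta: "bvc_at 0 t \<Longrightarrow> red (Lam a (App t (BVar 0))) t"
| SP: "red (Pair (Proj1 u) (Proj2 u)) u"
| gentop: "has_ty u \<tau> \<Longrightarrow> iso \<tau> \<Longrightarrow> u \<noteq> star_of \<tau> \<Longrightarrow> red u (star_of \<tau>)"
| eta_top: "iso \<tau> \<Longrightarrow> bvc_at 0 t \<Longrightarrow> red (Lam \<tau> (App t (star_of \<tau>))) t"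
| pair_top1: "has_ty u (Prod a \<tau>) \<Longrightarrow> iso \<tau> \<Longrightarrow> red (Pair (Proj1 u) (star_of \<tau>)) u"
| pair_top2: "has_ty u (Prod \<tau> b) \<Longrightarrow> iso \<tau> \<Longrightarrow> red (Pair (star_of \<tau>) (Proj2 u)) u"
| beta2: "red (TApp (TLam t) U) (topn 0 U t)"
| eta2: "tyc_at 0 s \<Longrightarrow> red (TLam (TApp s (TBound 0))) s"
| c_Lam: "(\<And>x. x \<notin> fst ` fvars t \<union> fst ` fvars t' \<Longrightarrow>
             red (opn 0 (FVar x a) t) (opn 0 (FVar x a) t')) \<Longrightarrow> red (Lam a t) (Lam a t')"
| c_App1: "red t t' \<Longrightarrow> red (App t u) (App t' u)"
| c_App2: "red u u' \<Longrightarrow> red (App t u) (App t u')"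
| c_Pair1: "red t t' \<Longrightarrow> red (Pair t u) (Pair t' u)"
| c_Pair2: "red u u' \<Longrightarrow> red (Pair t u) (Pair t u')"
| c_Proj1: "red t t' \<Longrightarrow> red (Proj1 t) (Proj1 t')"
| c_Proj2: "red t t' \<Longrightarrow> red (Proj2 t) (Proj2 t')"
| c_TLam: "(\<And>X. X \<notin> ftv_tm t \<union> ftv_tm t' \<Longrightarrow>
             red (topn 0 (TFree X) t) (topn 0 (TFree X) t')) \<Longrightarrow> red (TLam t) (TLam t')"
| c_TApp: "red t t' \<Longrightarrow> red (TApp t U) (TApp t' U)"

definition SN :: "tm \<Rightarrow> bool" where
  "SN t \<longleftrightarrow> \<not> (\<exists>f. f 0 = t \<and> (\<forall>n. red (f n) (f (Suc n))))"

fun neutral :: "tm \<Rightarrow> bool" where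
  "neutral (Pair u v) = False"
| "neutral (Lam a v) = False"
| "neutral (TLam u) = False"
| "neutral _ = True"

fun star_repl :: "nat \<Rightarrow> tm \<Rightarrow> tm" where
  "star_repl z Star = FVar z Top"
| "star_repl z (FVar x a) = FVar x a"
| "star_repl z (BVar i) = BVar i"
| "star_repl z (Lam a t) = Lam a (star_repl z t)"
| "star_repl z (App t s) = App (star_repl z t) (star_repl z s)"
| "star_repl z (Pair t s) = Pair (star_repl z t) (star_repl z s)"
| "star_repl z (Proj1 t) = Proj1 (star_repl z t)"
| "star_repl z (Proj2 t) = Proj2 (star_repl z t)"
| "star_repl z (TLam t) = TLam (star_repl z t)"
| "star_repl z (TApp t a) = TApp (star_repl z t) a"

definition variant_closed :: "tm set \<Rightarrow> bool" where
  "variant_closed A \<longleftrightarrow> (\<forall>t\<in>A. \<forall>z. (z, Top) \<notin> fvars t \<longrightarrow> star_repl z t \<in> A)"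

definition RC :: "ty \<Rightarrow> tm set \<Rightarrow> bool" where
  "RC a R \<longleftrightarrow>
     (\<forall>t\<in>R. has_ty t a) \<and>
     (iso a \<longrightarrow> star_of a \<in> R) \<and> variant_closed R \<and>
     (\<forall>t\<in>R. SN t) \<and>
     (\<forall>t\<in>R. \<forall>t'. red t t' \<longrightarrow> t' \<in> R) \<and>
     (\<forall>t. has_ty t a \<longrightarrow> neutral t \<longrightarrow> (\<forall>t'. red t t' \<longrightarrow> t' \<in> R) \<longrightarrow> t \<in> R)"

definition fresh_tv :: "nat list \<Rightarrow> ty list \<Rightarrow> ty \<Rightarrow> nat" where
  "fresh_tv Xs ps b = Suc (Max (insert 0 (set Xs \<union> \<Union> (ftv ` set ps) \<union> ftv b)))"

lemma size_topen_TFree[simp]: "size (topen_at k (TFree Y) a) = size a"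
  by (induction a arbitrary: k) auto

function RED :: "ty \<Rightarrow> nat list \<Rightarrow> ty list \<Rightarrow> tm set list \<Rightarrow> tm set" where
  "RED Top Xs ps Rs = {t. has_ty t Top \<and> SN t}"
| "RED (TFree X) Xs ps Rs = (case map_of (zip Xs Rs) X of Some R \<Rightarrow> R | None \<Rightarrow> {})"
| "RED (TBound i) Xs ps Rs = {}"
| "RED (Prod a b) Xs ps Rs =
     {t. has_ty t (simsubst Xs ps (Prod a b)) \<and>
         Proj1 t \<in> RED a Xs ps Rs \<and> Proj2 t \<in> RED b Xs ps Rs}"
| "RED (Arr a b) Xs ps Rs =
     {t. has_ty t (simsubst Xs ps (Arr a b)) \<and>
         (\<forall>u\<in>RED a Xs ps Rs. App t u \<in> RED b Xs ps Rs)}"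
| "RED (All b) Xs ps Rs =
     {t. has_ty t (simsubst Xs ps (All b)) \<and>
         (\<forall>p S. is_type p \<longrightarrow> RC p S \<longrightarrow>
            TApp t p \<in> RED (topen_at 0 (TFree (fresh_tv Xs ps b)) b)
                           (Xs @ [fresh_tv Xs ps b]) (ps @ [p]) (Rs @ [S]))}"
  by pat_completeness auto
termination
  by (relation "measure (\<lambda>(a, _, _, _). size a)") auto

end

theory Submission
  imports Defs
begin


lemma finite_ftv[simp]: "finite (ftv a)" by (induction a) auto
lemma finite_fvars[simp]: "finite (fvars t)" by (induction t) auto
lemma finite_ftv_tm[simp]: "finite (ftv_tm t)" by (induction t) auto

lemma size_opn_FVar[simp]: "size (opn k (FVar x a) t) = size t"
  by (induction t arbitrary: k) auto
lemma size_topn_TFree[simp]: "size (topn k (TFree X) t) = size t"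
  by (induction t arbitrary: k) auto

lemma lc_mono: "lc_ty_at k a \<Longrightarrow> k \<le> j \<Longrightarrow> lc_ty_at j a"
  by (induction a arbitrary: k j) auto
lemma topen_lc: "lc_ty_at k a \<Longrightarrow> k \<le> j \<Longrightarrow> topen_at j U a = a"
  by (induction a arbitrary: k j) auto
lemma topen_lc0[simp]: "is_type a \<Longrightarrow> topen_at j U a = a"
  using topen_lc by blast
lemma opn_bvc: "bvc_at k t \<Longrightarrow> k \<le> j \<Longrightarrow> opn j u t = t"
  by (induction t arbitrary: k j) auto
lemma opn_bvc0[simp]: "bvc_at 0 t \<Longrightarrow> opn j u t = t"
  using opn_bvc by blast
lemma topn_tyc: "tyc_at k t \<Longrightarrow> k \<le> j \<Longrightarrow> topn j U t = t"
  by (induction t arbitrary: k j) (auto simp: topen_lc)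
lemma topn_tyc0[simp]: "tyc_at 0 t \<Longrightarrow> topn j U t = t"
  using topn_tyc by blast
lemma tyc_mono: "tyc_at k t \<Longrightarrow> k \<le> j \<Longrightarrow> tyc_at j t"
  by (induction t arbitrary: k j) (auto intro: lc_mono)

lemma bvc_opn: "bvc_at k (opn k u t) \<Longrightarrow> bvc_at (Suc k) t"
  by (induction t arbitrary: k) (auto split: if_splits)
lemma lc_topen: "lc_ty_at k (topen_at k U a) \<Longrightarrow> lc_ty_at (Suc k) a"
  by (induction a arbitrary: k) (auto split: if_splits)
lemma lc_topen2: "lc_ty_at (Suc k) a \<Longrightarrow> lc_ty_at 0 U \<Longrightarrow> lc_ty_at k (topen_at k U a)"
  by (induction a arbitrary: k) (auto intro: lc_mono)
lemma tyc_topn: "tyc_at k (topn k U t) \<Longrightarrow> tyc_at (Suc k) t"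
  by (induction t arbitrary: k) (auto intro: lc_topen)
lemma tyc_opn: "tyc_at k (opn j u t) \<Longrightarrow> tyc_at k t"
  by (induction t arbitrary: k j) auto

lemma fvars_opn1: "fvars t \<subseteq> fvars (opn k u t)"
  by (induction t arbitrary: k) auto
lemma fvars_opn2: "fvars (opn k u t) \<subseteq> fvars u \<union> fvars t"
  by (induction t arbitrary: k) auto
lemma fvars_topn[simp]: "fvars (topn k U t) = fvars t"
  by (induction t arbitrary: k) auto
lemma ftv_topen1: "ftv a \<subseteq> ftv (topen_at k U a)"
  by (induction a arbitrary: k) auto
lemma ftv_topen2: "ftv (topen_at k U a) \<subseteq> ftv U \<union> ftv a"
  by (induction a arbitrary: k) auto
lemma ftv_tm_topn1: "ftv_tm t \<subseteq> ftv_tm (topn k U t)"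
  using ftv_topen1 by (induction t arbitrary: k) fastforce+
lemma ftv_tm_topn2: "ftv_tm (topn k U t) \<subseteq> ftv U \<union> ftv_tm t"
  using ftv_topen2 by (induction t arbitrary: k) fastforce+
lemma ftv_tm_opn1: "ftv_tm t \<subseteq> ftv_tm (opn k u t)"
  by (induction t arbitrary: k) auto
lemma ftv_tm_opn2: "ftv_tm (opn k u t) \<subseteq> ftv_tm u \<union> ftv_tm t"
  by (induction t arbitrary: k) auto

lemma topn_opn: "tyc_at 0 u \<Longrightarrow> topn k U (opn j u t) = opn j u (topn k U t)"
  by (induction t arbitrary: k j) auto
lemma opn_opn: "bvc_at 0 u \<Longrightarrow> bvc_at 0 v \<Longrightarrow> i \<noteq> j \<Longrightarrow>
   opn i u (opn j v t) = opn j v (opn i u t)"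
  by (induction t arbitrary: i j) auto


lemma topen_topen: "lc_ty_at 0 U \<Longrightarrow> lc_ty_at 0 V \<Longrightarrow> i \<noteq> j \<Longrightarrow>
   topen_at i U (topen_at j V a) = topen_at j V (topen_at i U a)"
  by (induction a arbitrary: i j) auto
lemma topn_topn: "lc_ty_at 0 U \<Longrightarrow> lc_ty_at 0 V \<Longrightarrow> i \<noteq> j \<Longrightarrow>
   topn i U (topn j V t) = topn j V (topn i U t)"
  by (induction t arbitrary: i j) (auto simp: topen_topen)

lemma opn_star_of[simp]: "opn k u (star_of \<tau>) = star_of \<tau>"
  by (induction \<tau> arbitrary: k) auto
lemma topn_star_of: "iso \<tau> \<Longrightarrow> topn k U (star_of \<tau>) = star_of (topen_at k U \<tau>)"
  by (induction \<tau> arbitrary: k rule: iso.induct) auto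
lemma fvars_star_of[simp]: "fvars (star_of \<tau>) = {}"
  by (induction \<tau>) auto
lemma bvc_star_of[simp]: "bvc_at k (star_of \<tau>)"
  by (induction \<tau> arbitrary: k) auto
lemma iso_topen: "iso a \<Longrightarrow> iso (topen_at k U a)"
  by (induction a arbitrary: k rule: iso.induct) auto

lemma opn_inj: "x \<notin> fst ` fvars t \<Longrightarrow> x \<notin> fst ` fvars t' \<Longrightarrow>
   opn k (FVar x a) t = opn k (FVar x a) t' \<Longrightarrow> t = t'"
proof (induction t arbitrary: t' k)
  case (Lam b t) then show ?case by (cases t') (auto split: if_splits simp: image_Un)
next
  case (App t1 t2) then show ?case by (cases t') (auto split: if_splits simp: image_Un)
next
  case (Pair t1 t2) then show ?case by (cases t') (auto split: if_splits simp: image_Un)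
next
  case (Proj1 t1) then show ?case by (cases t') (auto split: if_splits simp: image_Un)
next
  case (Proj2 t1) then show ?case by (cases t') (auto split: if_splits simp: image_Un)
next
  case (TLam t1) then show ?case by (cases t') (auto split: if_splits simp: image_Un)
next
  case (TApp t1 b) then show ?case by (cases t') (auto split: if_splits simp: image_Un)
qed (case_tac t'; auto split: if_splits)+

lemma topen_inj: "X \<notin> ftv a \<Longrightarrow> X \<notin> ftv b \<Longrightarrow>
   topen_at k (TFree X) a = topen_at k (TFree X) b \<Longrightarrow> a = b"
proof (induction a arbitrary: b k)
qed (case_tac b; auto split: if_splits)+

lemma topn_inj: "X \<notin> ftv_tm t \<Longrightarrow> X \<notin> ftv_tm t' \<Longrightarrow>
   topn k (TFree X) t = topn k (TFree X) t' \<Longrightarrow> t = t'"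
proof (induction t arbitrary: t' k)
qed (case_tac t'; auto dest: topen_inj)+




lemma fresh_name: "finite (S :: nat set) \<Longrightarrow> \<exists>x. x \<notin> S"
  using infinite_UNIV_nat ex_new_if_finite by blast

lemma bvc_topn[simp]: "bvc_at k (topn j U t) = bvc_at k t"
  by (induction t arbitrary: k j) auto

lemma has_ty_lc: "has_ty t A \<Longrightarrow> is_type A \<and> bvc_at 0 t \<and> tyc_at 0 t"
proof (induction rule: has_ty.induct)
  case (ty_Lam a t b)
  obtain x where "x \<notin> fst ` fvars t" using fresh_name[of "fst ` fvars t"] by auto
  with ty_Lam show ?case using bvc_opn[of 0 "FVar x a" t] tyc_opn[of 0 0 "FVar x a" t] by auto
next
  case (ty_TLam t b)
  obtain X where "X \<notin> ftv_tm t \<union> ftv b" using fresh_name[of "ftv_tm t \<union> ftv b"] by auto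
  with ty_TLam show ?case using tyc_topn[of 0 "TFree X" t] lc_topen[of 0 "TFree X" b] by auto
next
  case (ty_TApp t b U)
  then show ?case by (auto intro: lc_topen2 lc_mono)
qed auto

lemma has_ty_type: "has_ty t A \<Longrightarrow> is_type A" using has_ty_lc by blast
lemma has_ty_bvc: "has_ty t A \<Longrightarrow> bvc_at 0 t" using has_ty_lc by blast
lemma has_ty_tyc: "has_ty t A \<Longrightarrow> tyc_at 0 t" using has_ty_lc by blast


lemma has_ty_ftv: "has_ty t A \<Longrightarrow> ftv A \<subseteq> ftv_tm t"
proof (induction rule: has_ty.induct)
  case (ty_Lam a t b)
  obtain x where "x \<notin> fst ` fvars t" using fresh_name[of "fst ` fvars t"] by auto
  with ty_Lam have "ftv b \<subseteq> ftv_tm (opn 0 (FVar x a) t)" by auto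
  also have "\<dots> \<subseteq> ftv a \<union> ftv_tm t" using ftv_tm_opn2[of 0 "FVar x a" t] by auto
  finally show ?case by auto
next
  case (ty_TLam t b)
  obtain X where X: "X \<notin> ftv_tm t \<union> ftv b" using fresh_name[of "ftv_tm t \<union> ftv b"] by auto
  with ty_TLam have "ftv (topen_at 0 (TFree X) b) \<subseteq> ftv_tm (topn 0 (TFree X) t)" by auto
  also have "\<dots> \<subseteq> {X} \<union> ftv_tm t" using ftv_tm_topn2[of 0 "TFree X" t] by auto
  finally show ?case using ftv_topen1[of b 0 "TFree X"] X by auto
next
  case (ty_TApp t b U)
  then show ?case using ftv_topen2[of 0 U b] by auto
qed auto

section \<open>Swapping\<close>

definition swp :: "nat \<Rightarrow> nat \<Rightarrow> nat \<Rightarrow> nat" where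
  "swp x y n = (if n = x then y else if n = y then x else n)"

lemma swp_swp[simp]: "swp x y (swp x y n) = n" by (auto simp: swp_def)
lemma swp_inj[simp]: "(swp x y n = swp x y m) = (n = m)" by (auto simp: swp_def)
lemma swp_x[simp]: "swp x y x = y" and swp_y[simp]: "swp x y y = x" by (auto simp: swp_def)
lemma swp_other[simp]: "n \<noteq> x \<Longrightarrow> n \<noteq> y \<Longrightarrow> swp x y n = n" by (auto simp: swp_def)
lemma swp_mem: "(swp x y n \<in> swp x y ` S) = (n \<in> S)" by auto
lemma swp_img: "(z \<in> swp x y ` S) = (swp x y z \<in> S)"
  by (metis image_eqI imageE swp_swp)
lemma swp_eq_iff: "(swp x y n = m) = (n = swp x y m)" by auto

fun sw :: "nat \<Rightarrow> nat \<Rightarrow> tm \<Rightarrow> tm" where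
  "sw x y Star = Star"
| "sw x y (FVar n a) = FVar (swp x y n) a"
| "sw x y (BVar i) = BVar i"
| "sw x y (Lam a t) = Lam a (sw x y t)"
| "sw x y (App t s) = App (sw x y t) (sw x y s)"
| "sw x y (Pair t s) = Pair (sw x y t) (sw x y s)"
| "sw x y (Proj1 t) = Proj1 (sw x y t)"
| "sw x y (Proj2 t) = Proj2 (sw x y t)"
| "sw x y (TLam t) = TLam (sw x y t)"
| "sw x y (TApp t a) = TApp (sw x y t) a"

lemma sw_opn: "sw x y (opn k u t) = opn k (sw x y u) (sw x y t)"
  by (induction t arbitrary: k) auto
lemma sw_topn: "sw x y (topn k U t) = topn k U (sw x y t)"
  by (induction t arbitrary: k) auto
lemma fvars_sw: "fvars (sw x y t) = (\<lambda>(n,a). (swp x y n, a)) ` fvars t"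
  by (induction t) auto
lemma names_sw: "fst ` fvars (sw x y t) = swp x y ` fst ` fvars t"
  unfolding fvars_sw by force
lemma ftv_tm_sw[simp]: "ftv_tm (sw x y t) = ftv_tm t" by (induction t) auto
lemma bvc_sw[simp]: "bvc_at k (sw x y t) = bvc_at k t" by (induction t arbitrary: k) auto
lemma tyc_sw[simp]: "tyc_at k (sw x y t) = tyc_at k t" by (induction t arbitrary: k) auto
lemma sw_sw[simp]: "sw x y (sw x y t) = t" by (induction t) auto
lemma sw_fresh: "x \<notin> fst ` fvars t \<Longrightarrow> y \<notin> fst ` fvars t \<Longrightarrow> sw x y t = t"
  by (induction t) (auto simp: swp_def image_Un)
lemma sw_star_of[simp]: "sw x y (star_of \<tau>) = star_of \<tau>" by (induction \<tau>) auto
lemma neutral_sw[simp]: "neutral (sw x y t) = neutral t" by (cases t) auto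

lemma has_ty_sw: "has_ty t A \<Longrightarrow> has_ty (sw x y t) A"
proof (induction rule: has_ty.induct)
  case (ty_Lam a t b)
  show ?case
  proof (simp, rule has_ty.ty_Lam)
    fix z assume z: "z \<notin> fst ` fvars (sw x y t)"
    hence "swp x y z \<notin> fst ` fvars t" by (simp add: names_sw swp_img)
    with ty_Lam have "has_ty (sw x y (opn 0 (FVar (swp x y z) a) t)) b" by auto
    thus "has_ty (opn 0 (FVar z a) (sw x y t)) b" by (simp add: sw_opn)
  qed fact
next
  case (ty_TLam t b)
  show ?case by (simp, rule has_ty.ty_TLam) (use ty_TLam in \<open>auto simp: sw_topn\<close>)
qed (auto intro: has_ty.intros)

fun tswt :: "nat \<Rightarrow> nat \<Rightarrow> ty \<Rightarrow> ty" where
  "tswt X Y (TFree n) = TFree (swp X Y n)"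
| "tswt X Y (TBound i) = TBound i"
| "tswt X Y Top = Top"
| "tswt X Y (Prod a b) = Prod (tswt X Y a) (tswt X Y b)"
| "tswt X Y (Arr a b) = Arr (tswt X Y a) (tswt X Y b)"
| "tswt X Y (All a) = All (tswt X Y a)"

fun tsw :: "nat \<Rightarrow> nat \<Rightarrow> tm \<Rightarrow> tm" where
  "tsw X Y Star = Star"
| "tsw X Y (FVar n a) = FVar n (tswt X Y a)"
| "tsw X Y (BVar i) = BVar i"
| "tsw X Y (Lam a t) = Lam (tswt X Y a) (tsw X Y t)"
| "tsw X Y (App t s) = App (tsw X Y t) (tsw X Y s)"
| "tsw X Y (Pair t s) = Pair (tsw X Y t) (tsw X Y s)"
| "tsw X Y (Proj1 t) = Proj1 (tsw X Y t)"
| "tsw X Y (Proj2 t) = Proj2 (tsw X Y t)"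
| "tsw X Y (TLam t) = TLam (tsw X Y t)"
| "tsw X Y (TApp t a) = TApp (tsw X Y t) (tswt X Y a)"

lemma tswt_topen: "tswt X Y (topen_at k U a) = topen_at k (tswt X Y U) (tswt X Y a)"
  by (induction a arbitrary: k) auto
lemma ftv_tswt: "ftv (tswt X Y a) = swp X Y ` ftv a" by (induction a) auto
lemma lc_tswt[simp]: "lc_ty_at k (tswt X Y a) = lc_ty_at k a" by (induction a arbitrary: k) auto
lemma tswt_tswt[simp]: "tswt X Y (tswt X Y a) = a" by (induction a) auto
lemma tswt_fresh: "X \<notin> ftv a \<Longrightarrow> Y \<notin> ftv a \<Longrightarrow> tswt X Y a = a"
  by (induction a) (auto simp: swp_def)
lemma iso_tswt[simp]: "iso (tswt X Y a) = iso a" by (induction a) auto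

lemma tsw_opn: "tsw X Y (opn k u t) = opn k (tsw X Y u) (tsw X Y t)"
  by (induction t arbitrary: k) auto
lemma tsw_topn: "tsw X Y (topn k U t) = topn k (tswt X Y U) (tsw X Y t)"
  by (induction t arbitrary: k) (auto simp: tswt_topen)
lemma names_tsw[simp]: "fst ` fvars (tsw X Y t) = fst ` fvars t"
  by (induction t) (auto simp: image_Un)
lemma ftv_tm_tsw: "ftv_tm (tsw X Y t) = swp X Y ` ftv_tm t"
  by (induction t) (auto simp: ftv_tswt image_Un)
lemma bvc_tsw[simp]: "bvc_at k (tsw X Y t) = bvc_at k t" by (induction t arbitrary: k) auto
lemma tyc_tsw[simp]: "tyc_at k (tsw X Y t) = tyc_at k t" by (induction t arbitrary: k) auto
lemma tsw_tsw[simp]: "tsw X Y (tsw X Y t) = t" by (induction t) auto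
lemma tsw_fresh: "X \<notin> ftv_tm t \<Longrightarrow> Y \<notin> ftv_tm t \<Longrightarrow> tsw X Y t = t"
  by (induction t) (auto simp: tswt_fresh)
lemma tsw_star_of: "tsw X Y (star_of \<tau>) = star_of (tswt X Y \<tau>)" by (induction \<tau>) auto
lemma neutral_tsw[simp]: "neutral (tsw X Y t) = neutral t" by (cases t) auto

lemma has_ty_tsw: "has_ty t A \<Longrightarrow> has_ty (tsw X Y t) (tswt X Y A)"
proof (induction rule: has_ty.induct)
  case (ty_Lam a t b)
  show ?case
  proof (simp, rule has_ty.ty_Lam)
    fix z assume z: "z \<notin> fst ` fvars (tsw X Y t)"
    with ty_Lam have "has_ty (tsw X Y (opn 0 (FVar z a) t)) (tswt X Y b)" by auto
    thus "has_ty (opn 0 (FVar z (tswt X Y a)) (tsw X Y t)) (tswt X Y b)" by (simp add: tsw_opn)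
  qed (use ty_Lam in simp)
next
  case (ty_TLam t b)
  show ?case
  proof (simp, rule has_ty.ty_TLam)
    fix Z assume "Z \<notin> ftv_tm (tsw X Y t) \<union> ftv (tswt X Y b)"
    hence "swp X Y Z \<notin> ftv_tm t \<union> ftv b" by (simp add: ftv_tm_tsw ftv_tswt swp_img)
    with ty_TLam have "has_ty (tsw X Y (topn 0 (TFree (swp X Y Z)) t))
          (tswt X Y (topen_at 0 (TFree (swp X Y Z)) b))" by auto
    thus "has_ty (topn 0 (TFree Z) (tsw X Y t)) (topen_at 0 (TFree Z) (tswt X Y b))"
      by (simp add: tsw_topn tswt_topen)
  qed
next
  case (ty_TApp t b U)
  then show ?case using has_ty.ty_TApp[of "tsw X Y t" "tswt X Y b" "tswt X Y U"]
    by (simp add: tswt_topen)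
qed (auto intro: has_ty.intros)

lemma ty_Lam_ex:
  assumes "is_type a" "x \<notin> fst ` fvars t" "has_ty (opn 0 (FVar x a) t) b"
  shows "has_ty (Lam a t) (Arr a b)"
proof (rule has_ty.ty_Lam[OF assms(1)])
  fix y assume y: "y \<notin> fst ` fvars t"
  have "has_ty (sw x y (opn 0 (FVar x a) t)) b" by (rule has_ty_sw[OF assms(3)])
  thus "has_ty (opn 0 (FVar y a) t) b" using sw_fresh[OF assms(2) y] by (simp add: sw_opn)
qed

lemma ty_Lam_cof:
  assumes "is_type a" "finite F" "\<And>x. x \<notin> F \<Longrightarrow> x \<notin> fst ` fvars t \<Longrightarrow> has_ty (opn 0 (FVar x a) t) b"
  shows "has_ty (Lam a t) (Arr a b)"
proof -
  obtain x where "x \<notin> F \<union> fst ` fvars t" using fresh_name[of "F \<union> fst ` fvars t"] assms(2) by auto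
  thus ?thesis using ty_Lam_ex assms by auto
qed

lemma ty_TLam_ex:
  assumes "X \<notin> ftv_tm t \<union> ftv b" "has_ty (topn 0 (TFree X) t) (topen_at 0 (TFree X) b)"
  shows "has_ty (TLam t) (All b)"
proof (rule has_ty.ty_TLam)
  fix Y assume Y: "Y \<notin> ftv_tm t \<union> ftv b"
  have "has_ty (tsw X Y (topn 0 (TFree X) t)) (tswt X Y (topen_at 0 (TFree X) b))"
    by (rule has_ty_tsw[OF assms(2)])
  thus "has_ty (topn 0 (TFree Y) t) (topen_at 0 (TFree Y) b)"
    using assms(1) Y by (simp add: tsw_topn tswt_topen tsw_fresh tswt_fresh)
qed

lemma ty_TLam_cof:
  assumes "finite F" "\<And>X. X \<notin> F \<Longrightarrow> X \<notin> ftv_tm t \<union> ftv b \<Longrightarrow>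
     has_ty (topn 0 (TFree X) t) (topen_at 0 (TFree X) b)"
  shows "has_ty (TLam t) (All b)"
proof -
  obtain X where "X \<notin> F \<union> (ftv_tm t \<union> ftv b)" using fresh_name[of "F \<union> (ftv_tm t \<union> ftv b)"] assms(1) by auto
  thus ?thesis using ty_TLam_ex assms by auto
qed




inductive_cases ty_StarE: "has_ty Star A"
inductive_cases ty_FVarE: "has_ty (FVar x a) A"
inductive_cases ty_BVarE: "has_ty (BVar i) A"
inductive_cases ty_LamE: "has_ty (Lam a t) A"
inductive_cases ty_AppE: "has_ty (App t u) A"
inductive_cases ty_PairE: "has_ty (Pair t u) A"
inductive_cases ty_Proj1E: "has_ty (Proj1 t) A"
inductive_cases ty_Proj2E: "has_ty (Proj2 t) A"
inductive_cases ty_TLamE: "has_ty (TLam t) A"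
inductive_cases ty_TAppE: "has_ty (TApp t U) A"

lemma ty_unique: "has_ty t A \<Longrightarrow> has_ty t B \<Longrightarrow> A = B"
proof (induction arbitrary: B rule: has_ty.induct)
  case (ty_Lam a t b)
  from ty_Lam.prems obtain b' where B: "B = Arr a b'"
    and h: "\<And>x. x \<notin> fst ` fvars t \<Longrightarrow> has_ty (opn 0 (FVar x a) t) b'"
    by (auto elim: ty_LamE)
  obtain x where "x \<notin> fst ` fvars t" using fresh_name[of "fst ` fvars t"] by auto
  with ty_Lam h B show ?case by auto
next
  case (ty_TLam t b)
  from ty_TLam.prems obtain b' where B: "B = All b'"
    and h: "\<And>X. X \<notin> ftv_tm t \<union> ftv b' \<Longrightarrow> has_ty (topn 0 (TFree X) t) (topen_at 0 (TFree X) b')"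
    by (auto elim: ty_TLamE)
  obtain X where X: "X \<notin> ftv_tm t \<union> ftv b \<union> ftv b'" using fresh_name[of "ftv_tm t \<union> ftv b \<union> ftv b'"] by auto
  with ty_TLam h have "topen_at 0 (TFree X) b = topen_at 0 (TFree X) b'" by auto
  with X B show ?case using topen_inj by auto
next
  case (ty_App t a b u)
  from ty_App.prems show ?case by (elim ty_AppE) (use ty_App.IH in force)
next
  case (ty_Proj1 t a b) from ty_Proj1.prems show ?case by (elim ty_Proj1E) (use ty_Proj1.IH in force)
next
  case (ty_Proj2 t a b) from ty_Proj2.prems show ?case by (elim ty_Proj2E) (use ty_Proj2.IH in force)
next
  case (ty_TApp t b U) from ty_TApp.prems show ?case by (elim ty_TAppE) (use ty_TApp.IH in force)
next
  case ty_Star from ty_Star.prems show ?case by (rule ty_StarE) simp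
next
  case (ty_FVar a x) from ty_FVar.prems show ?case by (rule ty_FVarE) simp
next
  case (ty_Pair t a u b) from ty_Pair.prems show ?case by (rule ty_PairE) (use ty_Pair.IH in simp)
qed

lemma star_of_ty: "iso \<tau> \<Longrightarrow> is_type \<tau> \<Longrightarrow> has_ty (star_of \<tau>) \<tau>"
proof (induction "size \<tau>" arbitrary: \<tau> rule: less_induct)
  case less
  show ?case
  proof (cases \<tau>)
    case (Arr a b) with less show ?thesis by (auto intro!: has_ty.ty_Lam)
  next
    case (Prod a b) with less show ?thesis by (auto intro!: has_ty.ty_Pair)
  next
    case (All b)
    show ?thesis unfolding All
    proof (simp, rule has_ty.ty_TLam)
      fix X
      have "has_ty (star_of (topen_at 0 (TFree X) b)) (topen_at 0 (TFree X) b)"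
        using less All by (auto intro!: less.hyps iso_topen lc_topen2)
      thus "has_ty (topn 0 (TFree X) (star_of b)) (topen_at 0 (TFree X) b)"
        using less All by (simp add: topn_star_of)
    qed
  qed (use less in \<open>auto intro: has_ty.ty_Star\<close>)
qed

section \<open>Equivariance of reduction\<close>

lemma sw_eq_star: "(sw x y u = star_of \<tau>) = (u = star_of \<tau>)"
  by (metis sw_star_of sw_sw)
lemma tsw_eq_star: "(tsw X Y u = star_of (tswt X Y \<tau>)) = (u = star_of \<tau>)"
  by (metis tsw_star_of tsw_tsw)

lemma red_sw: "red t t' \<Longrightarrow> red (sw x y t) (sw x y t')"
proof (induction rule: red.induct)
  case (beta a t v) then show ?case by (simp add: sw_opn red.beta)
next
  case (gentop u \<tau>) then show ?case
    using red.gentop[of "sw x y u" \<tau>] has_ty_sw sw_eq_star by auto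
next
  case (pair_top1 u a \<tau>) then show ?case using red.pair_top1 has_ty_sw by fastforce
next
  case (pair_top2 u \<tau> b) then show ?case using red.pair_top2 has_ty_sw by fastforce
next
  case (beta2 t U) then show ?case by (simp add: sw_topn red.beta2)
next
  case (c_Lam t t' a)
  show ?case
  proof (simp, rule red.c_Lam)
    fix z assume "z \<notin> fst ` fvars (sw x y t) \<union> fst ` fvars (sw x y t')"
    hence "swp x y z \<notin> fst ` fvars t \<union> fst ` fvars t'" by (simp add: names_sw swp_img)
    with c_Lam.IH have "red (sw x y (opn 0 (FVar (swp x y z) a) t)) (sw x y (opn 0 (FVar (swp x y z) a) t'))"
      by blast
    thus "red (opn 0 (FVar z a) (sw x y t)) (opn 0 (FVar z a) (sw x y t'))" by (simp add: sw_opn)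
  qed
next
  case (c_TLam t t')
  show ?case by (simp, rule red.c_TLam) (use c_TLam.IH in \<open>auto simp: sw_topn\<close>)
qed (auto intro: red.proj1 red.proj2 red.eta red.SP red.eta_top red.eta2 red.c_App1 red.c_App2
  red.c_Pair1 red.c_Pair2 red.c_Proj1 red.c_Proj2 red.c_TApp)

lemma red_tsw: "red t t' \<Longrightarrow> red (tsw X Y t) (tsw X Y t')"
proof (induction rule: red.induct)
  case (beta a t v) then show ?case by (simp add: tsw_opn red.beta)
next
  case (gentop u \<tau>) then show ?case
    using red.gentop[of "tsw X Y u" "tswt X Y \<tau>"] has_ty_tsw tsw_eq_star by (auto simp: tsw_star_of)
next
  case (eta_top \<tau> t) then show ?case using red.eta_top[of "tswt X Y \<tau>"] by (simp add: tsw_star_of)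
next
  case (pair_top1 u a \<tau>) then show ?case
    using red.pair_top1[of "tsw X Y u" "tswt X Y a" "tswt X Y \<tau>"] has_ty_tsw by (fastforce simp: tsw_star_of)
next
  case (pair_top2 u \<tau> b) then show ?case
    using red.pair_top2[of "tsw X Y u" "tswt X Y \<tau>" "tswt X Y b"] has_ty_tsw by (fastforce simp: tsw_star_of)
next
  case (beta2 t U) then show ?case by (simp add: tsw_topn red.beta2)
next
  case (c_Lam t t' a)
  show ?case
  proof (simp, rule red.c_Lam)
    fix z assume "z \<notin> fst ` fvars (tsw X Y t) \<union> fst ` fvars (tsw X Y t')"
    with c_Lam.IH have "red (tsw X Y (opn 0 (FVar z a) t)) (tsw X Y (opn 0 (FVar z a) t'))"
      by auto
    thus "red (opn 0 (FVar z (tswt X Y a)) (tsw X Y t)) (opn 0 (FVar z (tswt X Y a)) (tsw X Y t'))"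
      by (simp add: tsw_opn)
  qed
next
  case (c_TLam t t')
  show ?case
  proof (simp, rule red.c_TLam)
    fix Z assume "Z \<notin> ftv_tm (tsw X Y t) \<union> ftv_tm (tsw X Y t')"
    hence "swp X Y Z \<notin> ftv_tm t \<union> ftv_tm t'" by (simp add: ftv_tm_tsw swp_img)
    with c_TLam.IH have "red (tsw X Y (topn 0 (TFree (swp X Y Z)) t)) (tsw X Y (topn 0 (TFree (swp X Y Z)) t'))"
      by blast
    thus "red (topn 0 (TFree Z) (tsw X Y t)) (topn 0 (TFree Z) (tsw X Y t'))" by (simp add: tsw_topn)
  qed
qed (auto intro: red.proj1 red.proj2 red.eta red.SP red.eta_top red.eta2 red.c_App1 red.c_App2
  red.c_Pair1 red.c_Pair2 red.c_Proj1 red.c_Proj2 red.c_TApp)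

lemma c_Lam_ex:
  assumes "x \<notin> fst ` fvars t \<union> fst ` fvars t'" "red (opn 0 (FVar x a) t) (opn 0 (FVar x a) t')"
  shows "red (Lam a t) (Lam a t')"
proof (rule red.c_Lam)
  fix y assume y: "y \<notin> fst ` fvars t \<union> fst ` fvars t'"
  have "red (sw x y (opn 0 (FVar x a) t)) (sw x y (opn 0 (FVar x a) t'))" by (rule red_sw[OF assms(2)])
  thus "red (opn 0 (FVar y a) t) (opn 0 (FVar y a) t')"
    using assms(1) y by (simp add: sw_opn sw_fresh)
qed

lemma c_Lam_cof:
  assumes "finite F" "\<And>x. x \<notin> F \<Longrightarrow> x \<notin> fst ` fvars t \<union> fst ` fvars t' \<Longrightarrow> red (opn 0 (FVar x a) t) (opn 0 (FVar x a) t')"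
  shows "red (Lam a t) (Lam a t')"
proof -
  obtain x where "x \<notin> F \<union> (fst ` fvars t \<union> fst ` fvars t')"
    using fresh_name[of "F \<union> (fst ` fvars t \<union> fst ` fvars t')"] assms(1) by auto
  thus ?thesis using c_Lam_ex assms by auto
qed

lemma c_TLam_ex:
  assumes "X \<notin> ftv_tm t \<union> ftv_tm t'" "red (topn 0 (TFree X) t) (topn 0 (TFree X) t')"
  shows "red (TLam t) (TLam t')"
proof (rule red.c_TLam)
  fix Y assume Y: "Y \<notin> ftv_tm t \<union> ftv_tm t'"
  have "red (tsw X Y (topn 0 (TFree X) t)) (tsw X Y (topn 0 (TFree X) t'))" by (rule red_tsw[OF assms(2)])
  thus "red (topn 0 (TFree Y) t) (topn 0 (TFree Y) t')"
    using assms(1) Y by (simp add: tsw_topn tsw_fresh)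
qed

lemma c_TLam_cof:
  assumes "finite F" "\<And>X. X \<notin> F \<Longrightarrow> X \<notin> ftv_tm t \<union> ftv_tm t' \<Longrightarrow> red (topn 0 (TFree X) t) (topn 0 (TFree X) t')"
  shows "red (TLam t) (TLam t')"
proof -
  obtain X where "X \<notin> F \<union> (ftv_tm t \<union> ftv_tm t')"
    using fresh_name[of "F \<union> (ftv_tm t \<union> ftv_tm t')"] assms(1) by auto
  thus ?thesis using c_TLam_ex assms by auto
qed




fun subst :: "nat \<Rightarrow> ty \<Rightarrow> tm \<Rightarrow> tm \<Rightarrow> tm" where
  "subst x a v Star = Star"
| "subst x a v (FVar y b) = (if y = x \<and> b = a then v else FVar y b)"
| "subst x a v (BVar i) = BVar i"
| "subst x a v (Lam b t) = Lam b (subst x a v t)"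
| "subst x a v (App t s) = App (subst x a v t) (subst x a v s)"
| "subst x a v (Pair t s) = Pair (subst x a v t) (subst x a v s)"
| "subst x a v (Proj1 t) = Proj1 (subst x a v t)"
| "subst x a v (Proj2 t) = Proj2 (subst x a v t)"
| "subst x a v (TLam t) = TLam (subst x a v t)"
| "subst x a v (TApp t b) = TApp (subst x a v t) b"

lemma subst_opn: "bvc_at 0 v \<Longrightarrow> subst x a v (opn k u t) = opn k (subst x a v u) (subst x a v t)"
  by (induction t arbitrary: k) auto
lemma subst_fresh: "(x, a) \<notin> fvars t \<Longrightarrow> subst x a v t = t"
  by (induction t) auto
lemma subst_topn: "tyc_at 0 v \<Longrightarrow> topn k U (subst x a v t) = subst x a v (topn k U t)"
  by (induction t arbitrary: k) auto
lemma fvars_subst: "fvars t - {(x, a)} \<subseteq> fvars (subst x a v t)"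
  by (induction t) auto
lemma ftv_tm_subst: "ftv_tm t \<subseteq> ftv_tm (subst x a v t) \<union> ftv a"
  by (induction t) auto

lemma has_ty_subst: "has_ty s B \<Longrightarrow> has_ty v a \<Longrightarrow> has_ty (subst x a v s) B"
proof (induction arbitrary: v rule: has_ty.induct)
  case (ty_FVar b y) then show ?case by (auto intro: has_ty.ty_FVar)
next
  case (ty_Lam c t b)
  show ?case
  proof (simp, rule ty_Lam_cof[of _ "{x}"])
    fix z assume z: "z \<notin> {x}" "z \<notin> fst ` fvars (subst x a v t)"
    hence "z \<notin> fst ` fvars t" using fvars_subst[of t x a v] by force
    with ty_Lam have "has_ty (subst x a v (opn 0 (FVar z c) t)) b" by auto
    thus "has_ty (opn 0 (FVar z c) (subst x a v t)) b" using z has_ty_bvc[OF ty_Lam.prems] by (simp add: subst_opn)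
  qed (use ty_Lam in auto)
next
  case (ty_TLam t b)
  have tv: "tyc_at 0 v" using has_ty_tyc[OF ty_TLam.prems] .
  show ?case
  proof (simp, rule ty_TLam_cof[of "ftv a"])
    fix X assume X: "X \<notin> ftv a" "X \<notin> ftv_tm (subst x a v t) \<union> ftv b"
    hence "X \<notin> ftv_tm t \<union> ftv b" using ftv_tm_subst[of t x a v] by auto
    with ty_TLam have "has_ty (subst x a v (topn 0 (TFree X) t)) (topen_at 0 (TFree X) b)" by auto
    thus "has_ty (topn 0 (TFree X) (subst x a v t)) (topen_at 0 (TFree X) b)"
      using tv by (simp add: subst_topn)
  qed simp
next
  case ty_Star then show ?case by (simp add: has_ty.ty_Star)
next
  case (ty_App t a' b u) then show ?case by (auto intro: has_ty.ty_App)
next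
  case (ty_Pair t a' u b) then show ?case by (auto intro: has_ty.ty_Pair)
next
  case (ty_Proj1 t a' b) then show ?case by (auto intro: has_ty.ty_Proj1)
next
  case (ty_Proj2 t a' b) then show ?case by (auto intro: has_ty.ty_Proj2)
next
  case (ty_TApp t b U) then show ?case by (auto intro: has_ty.ty_TApp)
qed

lemma has_ty_beta:
  assumes "\<And>x. x \<notin> fst ` fvars t \<Longrightarrow> has_ty (opn 0 (FVar x a) t) b" "has_ty v a"
  shows "has_ty (opn 0 v t) b"
proof -
  obtain x where x: "x \<notin> fst ` fvars t" using fresh_name[of "fst ` fvars t"] by auto
  hence "(x, a) \<notin> fvars t" by force
  have "has_ty (subst x a v (opn 0 (FVar x a) t)) b" using has_ty_subst assms x by blast
  thus ?thesis using \<open>(x, a) \<notin> fvars t\<close> has_ty_bvc[OF assms(2)] by (simp add: subst_opn subst_fresh)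
qed

definition lcmap :: "(nat \<Rightarrow> ty option) \<Rightarrow> bool" where
  "lcmap s \<longleftrightarrow> (\<forall>Y U. s Y = Some U \<longrightarrow> is_type U)"

fun tmsubst :: "(nat \<Rightarrow> ty option) \<Rightarrow> tm \<Rightarrow> tm" where
  "tmsubst s Star = Star"
| "tmsubst s (FVar y b) = FVar y (tsubst s b)"
| "tmsubst s (BVar i) = BVar i"
| "tmsubst s (Lam b t) = Lam (tsubst s b) (tmsubst s t)"
| "tmsubst s (App t u) = App (tmsubst s t) (tmsubst s u)"
| "tmsubst s (Pair t u) = Pair (tmsubst s t) (tmsubst s u)"
| "tmsubst s (Proj1 t) = Proj1 (tmsubst s t)"
| "tmsubst s (Proj2 t) = Proj2 (tmsubst s t)"
| "tmsubst s (TLam t) = TLam (tmsubst s t)"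
| "tmsubst s (TApp t b) = TApp (tmsubst s t) (tsubst s b)"

lemma tsubst_topen: "lcmap s \<Longrightarrow> tsubst s (topen_at k U a) = topen_at k (tsubst s U) (tsubst s a)"
  by (induction a arbitrary: k) (auto simp: lcmap_def split: option.splits)
lemma lc_tsubst: "lc_ty_at k a \<Longrightarrow> lcmap s \<Longrightarrow> lc_ty_at k (tsubst s a)"
  by (induction a arbitrary: k) (auto simp: lcmap_def split: option.splits intro: lc_mono)
lemma ftv_tsubst: "ftv a \<subseteq> ftv (tsubst s a) \<union> dom s"
  by (induction a) (auto split: option.splits)
lemma tsubst_fresh: "(\<forall>Y\<in>ftv a. s Y = None) \<Longrightarrow> tsubst s a = a"
  by (induction a) auto
lemma tmsubst_opn: "tmsubst s (opn k u t) = opn k (tmsubst s u) (tmsubst s t)"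
  by (induction t arbitrary: k) auto
lemma tmsubst_topn: "lcmap s \<Longrightarrow> tmsubst s (topn k U t) = topn k (tsubst s U) (tmsubst s t)"
  by (induction t arbitrary: k) (auto simp: tsubst_topen)
lemma names_tmsubst[simp]: "fst ` fvars (tmsubst s t) = fst ` fvars t"
  by (induction t) (auto simp: image_Un)
lemma ftv_tm_tmsubst: "ftv_tm t \<subseteq> ftv_tm (tmsubst s t) \<union> dom s"
  using ftv_tsubst by (induction t) fastforce+
lemma tmsubst_fresh: "(\<forall>Y\<in>ftv_tm t. s Y = None) \<Longrightarrow> tmsubst s t = t"
  by (induction t) (auto simp: tsubst_fresh)

lemma has_ty_tmsubst: "has_ty t A \<Longrightarrow> lcmap s \<Longrightarrow> finite (dom s) \<Longrightarrow> has_ty (tmsubst s t) (tsubst s A)"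
proof (induction rule: has_ty.induct)
  case (ty_FVar a x) then show ?case by (auto intro: has_ty.ty_FVar lc_tsubst)
next
  case (ty_Lam a t b)
  show ?case
  proof (simp, rule has_ty.ty_Lam)
    fix z assume z: "z \<notin> fst ` fvars (tmsubst s t)"
    with ty_Lam have "has_ty (tmsubst s (opn 0 (FVar z a) t)) (tsubst s b)" by auto
    thus "has_ty (opn 0 (FVar z (tsubst s a)) (tmsubst s t)) (tsubst s b)" by (simp add: tmsubst_opn)
  qed (use ty_Lam in \<open>auto intro: lc_tsubst\<close>)
next
  case (ty_TLam t b)
  show ?case
  proof (simp, rule ty_TLam_cof[of "dom s"])
    fix X assume X: "X \<notin> dom s" "X \<notin> ftv_tm (tmsubst s t) \<union> ftv (tsubst s b)"
    hence "X \<notin> ftv_tm t \<union> ftv b" using ftv_tm_tmsubst[of t s] ftv_tsubst[of b s] by auto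
    with ty_TLam have "has_ty (tmsubst s (topn 0 (TFree X) t)) (tsubst s (topen_at 0 (TFree X) b))" by auto
    thus "has_ty (topn 0 (TFree X) (tmsubst s t)) (topen_at 0 (TFree X) (tsubst s b))"
      using X ty_TLam.prems by (simp add: tmsubst_topn tsubst_topen domIff)
  qed (use ty_TLam in simp)
next
  case ty_Star then show ?case by (simp add: has_ty.ty_Star)
next
  case (ty_App t a' b u) then show ?case by (auto intro: has_ty.ty_App)
next
  case (ty_Pair t a' u b) then show ?case by (auto intro: has_ty.ty_Pair)
next
  case (ty_Proj1 t a' b) then show ?case by (auto intro: has_ty.ty_Proj1)
next
  case (ty_Proj2 t a' b) then show ?case by (auto intro: has_ty.ty_Proj2)
next
  case (ty_TApp t b U)
  then have "has_ty (TApp (tmsubst s t) (tsubst s U)) (topen_at 0 (tsubst s U) (tsubst s b))"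
    by (auto intro!: has_ty.ty_TApp lc_tsubst)
  then show ?case using ty_TApp.prems by (simp add: tsubst_topen)
qed

lemma has_ty_beta2:
  assumes "\<And>X. X \<notin> ftv_tm t \<union> ftv b \<Longrightarrow> has_ty (topn 0 (TFree X) t) (topen_at 0 (TFree X) b)"
    "is_type U"
  shows "has_ty (topn 0 U t) (topen_at 0 U b)"
proof -
  obtain X where X: "X \<notin> ftv_tm t \<union> ftv b" using fresh_name[of "ftv_tm t \<union> ftv b"] by auto
  let ?s = "[X \<mapsto> U]"
  have ls: "lcmap ?s" using assms(2) by (auto simp: lcmap_def)
  have "has_ty (tmsubst ?s (topn 0 (TFree X) t)) (tsubst ?s (topen_at 0 (TFree X) b))"
    using has_ty_tmsubst assms X ls by auto
  moreover have "tmsubst ?s t = t" using X by (intro tmsubst_fresh) auto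
  moreover have "tsubst ?s b = b" using X by (intro tsubst_fresh) auto
  ultimately show ?thesis using ls by (simp add: tmsubst_topn tsubst_topen)
qed




section \<open>Subject reduction\<close>

lemma subject_red: "red t t' \<Longrightarrow> has_ty t A \<Longrightarrow> has_ty t' A"
proof (induction arbitrary: A rule: red.induct)
  case (beta a t v)
  from beta.prems obtain c where h1: "has_ty (Lam a t) (Arr c A)" and h2: "has_ty v c"
    by (rule ty_AppE)
  from h1 obtain b where e: "Arr c A = Arr a b" and
      h3: "\<And>x. x \<notin> fst ` fvars t \<Longrightarrow> has_ty (opn 0 (FVar x a) t) b"
    by (rule ty_LamE) blast
  from e have "c = a" "A = b" by auto
  with h2 have "has_ty v a" by simp
  from has_ty_beta[OF h3 this] show ?case using \<open>A = b\<close> by simp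
next
  case (proj1 u v) from proj1.prems show ?case by (auto elim!: ty_Proj1E ty_PairE)
next
  case (proj2 u v) from proj2.prems show ?case by (auto elim!: ty_Proj2E ty_PairE)
next
  case (eta t a)
  from eta.prems obtain b where A: "A = Arr a b"
     and h: "\<And>x. x \<notin> fst ` fvars (App t (BVar 0)) \<Longrightarrow> has_ty (opn 0 (FVar x a) (App t (BVar 0))) b"
    by (rule ty_LamE) blast
  obtain x where x: "x \<notin> fst ` fvars t" using fresh_name[of "fst ` fvars t"] by auto
  with h eta.hyps have "has_ty (App t (FVar x a)) b" by simp
  then obtain c where "has_ty t (Arr c b)" "has_ty (FVar x a) c" by (rule ty_AppE)
  then show ?case using A by (auto elim: ty_FVarE)
next
  case (SP u)
  from SP.prems obtain a b where A: "A = Prod a b" and "has_ty (Proj1 u) a" "has_ty (Proj2 u) b"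
    by (rule ty_PairE)
  then obtain b1 a2 where "has_ty u (Prod a b1)" "has_ty u (Prod a2 b)"
    by (auto elim!: ty_Proj1E ty_Proj2E)
  then show ?case using A ty_unique by fastforce
next
  case (gentop u \<tau>)
  then have "A = \<tau>" using ty_unique by blast
  then show ?case using gentop star_of_ty has_ty_type by blast
next
  case (eta_top \<tau> t)
  from eta_top.prems obtain b where A: "A = Arr \<tau> b" and ti: "is_type \<tau>"
     and h: "\<And>x. x \<notin> fst ` fvars (App t (star_of \<tau>)) \<Longrightarrow> has_ty (opn 0 (FVar x \<tau>) (App t (star_of \<tau>))) b"
    by (rule ty_LamE) blast
  obtain x where x: "x \<notin> fst ` fvars t" using fresh_name[of "fst ` fvars t"] by auto
  with h eta_top.hyps have "has_ty (App t (star_of \<tau>)) b" by simp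
  then obtain c where c1: "has_ty t (Arr c b)" and c2: "has_ty (star_of \<tau>) c" by (rule ty_AppE)
  have "has_ty (star_of \<tau>) \<tau>" by (rule star_of_ty[OF eta_top.hyps(1) ti])
  with c2 have "c = \<tau>" by (rule ty_unique)
  with c1 A show ?case by simp
next
  case (pair_top1 u a \<tau>)
  from pair_top1.prems obtain a' b' where A: "A = Prod a' b'" and h1: "has_ty (Proj1 u) a'"
      and h2: "has_ty (star_of \<tau>) b'" by (rule ty_PairE)
  from h1 obtain b'' where "has_ty u (Prod a' b'')" by (rule ty_Proj1E)
  from ty_unique[OF this pair_top1.hyps(1)] have "a' = a" by simp
  have "is_type \<tau>" using has_ty_type[OF pair_top1.hyps(1)] by simp
  hence "has_ty (star_of \<tau>) \<tau>" using star_of_ty pair_top1.hyps(2) by blast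
  hence "b' = \<tau>" using h2 ty_unique by blast
  then show ?case using A \<open>a' = a\<close> pair_top1.hyps by simp
next
  case (pair_top2 u \<tau> b)
  from pair_top2.prems obtain a' b' where A: "A = Prod a' b'" and h1: "has_ty (star_of \<tau>) a'"
      and h2: "has_ty (Proj2 u) b'" by (rule ty_PairE)
  from h2 obtain a'' where "has_ty u (Prod a'' b')" by (rule ty_Proj2E)
  from ty_unique[OF this pair_top2.hyps(1)] have "b' = b" by simp
  have "is_type \<tau>" using has_ty_type[OF pair_top2.hyps(1)] by simp
  hence "has_ty (star_of \<tau>) \<tau>" using star_of_ty pair_top2.hyps(2) by blast
  hence "a' = \<tau>" using h1 ty_unique by blast
  then show ?case using A \<open>b' = b\<close> pair_top2.hyps by simp
next
  case (beta2 t U)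
  from beta2.prems obtain b where A: "A = topen_at 0 U b" and h: "has_ty (TLam t) (All b)"
     and U: "is_type U" by (rule ty_TAppE) blast
  from h have "\<And>X. X \<notin> ftv_tm t \<union> ftv b \<Longrightarrow> has_ty (topn 0 (TFree X) t) (topen_at 0 (TFree X) b)"
    by (rule ty_TLamE) blast
  then show ?case using A U has_ty_beta2 by blast
next
  case (eta2 s)
  from eta2.prems obtain b where A: "A = All b"
     and h: "\<And>X. X \<notin> ftv_tm (TApp s (TBound 0)) \<union> ftv b \<Longrightarrow>
        has_ty (topn 0 (TFree X) (TApp s (TBound 0))) (topen_at 0 (TFree X) b)"
    by (rule ty_TLamE) blast
  obtain X where X: "X \<notin> ftv_tm s \<union> ftv b" using fresh_name[of "ftv_tm s \<union> ftv b"] by auto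
  with h eta2.hyps have "has_ty (TApp s (TFree X)) (topen_at 0 (TFree X) b)" by simp
  then obtain c where c: "topen_at 0 (TFree X) b = topen_at 0 (TFree X) c" "has_ty s (All c)"
    by (rule ty_TAppE) blast
  have "X \<notin> ftv c" using has_ty_ftv[OF c(2)] X by auto
  moreover have "X \<notin> ftv b" using X by simp
  ultimately have "b = c" using topen_inj[OF \<open>X \<notin> ftv b\<close> \<open>X \<notin> ftv c\<close> c(1)] by simp
  hence "c = b" by simp
  then show ?case using A c by simp
next
  case (c_Lam t t' a)
  from c_Lam.prems obtain b where A: "A = Arr a b" and ti: "is_type a"
     and h: "\<And>x. x \<notin> fst ` fvars t \<Longrightarrow> has_ty (opn 0 (FVar x a) t) b"
    by (rule ty_LamE) blast
  show ?case unfolding A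
    by (rule ty_Lam_cof[OF ti, of "fst ` fvars t"]) (use c_Lam.IH h in auto)
next
  case (c_App1 t t' u) from c_App1.prems show ?case by (rule ty_AppE) (use c_App1.IH in \<open>auto intro: has_ty.ty_App\<close>)
next
  case (c_App2 u u' t) from c_App2.prems show ?case by (rule ty_AppE) (use c_App2.IH in \<open>auto intro: has_ty.ty_App\<close>)
next
  case (c_Pair1 t t' u) from c_Pair1.prems show ?case by (rule ty_PairE) (use c_Pair1.IH in \<open>auto intro: has_ty.ty_Pair\<close>)
next
  case (c_Pair2 u u' t) from c_Pair2.prems show ?case by (rule ty_PairE) (use c_Pair2.IH in \<open>auto intro: has_ty.ty_Pair\<close>)
next
  case (c_Proj1 t t') from c_Proj1.prems show ?case by (rule ty_Proj1E) (use c_Proj1.IH in \<open>auto intro: has_ty.ty_Proj1\<close>)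
next
  case (c_Proj2 t t') from c_Proj2.prems show ?case by (rule ty_Proj2E) (use c_Proj2.IH in \<open>auto intro: has_ty.ty_Proj2\<close>)
next
  case (c_TLam t t')
  from c_TLam.prems obtain b where A: "A = All b"
     and h: "\<And>X. X \<notin> ftv_tm t \<union> ftv b \<Longrightarrow> has_ty (topn 0 (TFree X) t) (topen_at 0 (TFree X) b)"
    by (rule ty_TLamE) blast
  show ?case unfolding A
    by (rule ty_TLam_cof[of "ftv_tm t"]) (use c_TLam.IH h in auto)
next
  case (c_TApp t t' U) from c_TApp.prems show ?case by (rule ty_TAppE) (use c_TApp.IH in \<open>auto intro: has_ty.ty_TApp\<close>)
qed

lemma star_of_not[simp]: "star_of \<tau> \<noteq> App t u" "star_of \<tau> \<noteq> Proj1 t" "star_of \<tau> \<noteq> Proj2 t"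
  "star_of \<tau> \<noteq> TApp t U" "star_of \<tau> \<noteq> FVar x a" "star_of \<tau> \<noteq> BVar i"
  by (cases \<tau>; simp)+
lemma star_of_not'[simp]: "App t u \<noteq> star_of \<tau>" "Proj1 t \<noteq> star_of \<tau>" "Proj2 t \<noteq> star_of \<tau>"
  "TApp t U \<noteq> star_of \<tau>" "FVar x a \<noteq> star_of \<tau>" "BVar i \<noteq> star_of \<tau>"
  by (cases \<tau>; simp)+

lemma star_normal_aux: "red s r \<Longrightarrow> s = star_of \<tau> \<Longrightarrow> iso \<tau> \<Longrightarrow> is_type \<tau> \<Longrightarrow> False"
proof (induction arbitrary: \<tau> rule: red.induct)
  case (gentop u \<tau>')
  then show ?case using star_of_ty ty_unique has_ty_type by metis
next
  case (c_Lam t t' a)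
  then obtain B where "\<tau> = Arr a B" "t = star_of B" by (cases \<tau>) auto
  moreover obtain x where "x \<notin> fst ` fvars t \<union> fst ` fvars t'"
    using fresh_name[of "fst ` fvars t \<union> fst ` fvars t'"] by auto
  ultimately show ?case using c_Lam by auto
next
  case (c_Pair1 t t' u) then show ?case by (cases \<tau>) auto
next
  case (c_Pair2 u u' t) then show ?case by (cases \<tau>) auto
next
  case (c_TLam t t')
  then obtain B where B: "\<tau> = All B" "t = star_of B" by (cases \<tau>) auto
  obtain X where X: "X \<notin> ftv_tm t \<union> ftv_tm t'" using fresh_name[of "ftv_tm t \<union> ftv_tm t'"] by auto
  have "topn 0 (TFree X) t = star_of (topen_at 0 (TFree X) B)" using B c_TLam.prems by (simp add: topn_star_of)
  moreover have "iso (topen_at 0 (TFree X) B)" using B c_TLam.prems by (simp add: iso_topen)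
  moreover have "is_type (topen_at 0 (TFree X) B)" using B c_TLam.prems by (auto intro: lc_topen2)
  ultimately show ?case using c_TLam.IH X by blast
next
  case (eta t a) then show ?case by (cases \<tau>) auto
next
  case (eta_top \<tau>' t) then show ?case by (cases \<tau>) auto
next
  case (SP u) then show ?case by (cases \<tau>) auto
next
  case (pair_top1 u a \<tau>') then show ?case by (cases \<tau>) auto
next
  case (pair_top2 u \<tau>' b) then show ?case by (cases \<tau>) auto
next
  case (eta2 s) then show ?case by (cases \<tau>) auto
qed (case_tac \<tau>; simp)+

lemma star_normal: "iso \<tau> \<Longrightarrow> is_type \<tau> \<Longrightarrow> \<not> red (star_of \<tau>) r"
  using star_normal_aux by blast




section \<open>Strong normalisation\<close>

definition Rr :: "tm \<Rightarrow> tm \<Rightarrow> bool" where "Rr a b \<longleftrightarrow> red b a"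

lemma accp_imp_SN: "Wellfounded.accp Rr t \<Longrightarrow> SN t"
proof (induction rule: accp.induct)
  case (accI x)
  show ?case unfolding SN_def
  proof
    assume "\<exists>f. f 0 = x \<and> (\<forall>n. red (f n) (f (Suc n)))"
    then obtain f where f: "f 0 = x" "\<forall>n. red (f n) (f (Suc n))" by blast
    hence "red x (f 1)" by (metis One_nat_def)
    hence "SN (f 1)" using accI.IH by (auto simp: Rr_def)
    moreover have "\<exists>g. g 0 = f 1 \<and> (\<forall>n. red (g n) (g (Suc n)))"
      by (rule exI[of _ "\<lambda>n. f (Suc n)"]) (use f in simp)
    ultimately show False unfolding SN_def by (elim notE)
  qed
qed

lemma notacc_step: "\<not> Wellfounded.accp Rr y \<Longrightarrow> \<exists>z. red y z \<and> \<not> Wellfounded.accp Rr z"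
  using accp.accI[of Rr y] by (auto simp: Rr_def)

lemma SN_imp_accp: "SN t \<Longrightarrow> Wellfounded.accp Rr t"
proof (rule ccontr)
  assume sn: "SN t" and n: "\<not> Wellfounded.accp Rr t"
  define nxt where "nxt y = (SOME z. red y z \<and> \<not> Wellfounded.accp Rr z)" for y
  define f where "f n = (nxt ^^ n) t" for n
  have fs: "f (Suc n) = nxt (f n)" for n by (simp add: f_def)
  have A: "\<not> Wellfounded.accp Rr (f n)" for n
  proof (induction n)
    case 0 then show ?case using n by (simp add: f_def)
  next
    case (Suc n)
    then have "red (f n) (nxt (f n)) \<and> \<not> Wellfounded.accp Rr (nxt (f n))"
      unfolding nxt_def by (rule someI_ex[OF notacc_step])
    then show ?case by (simp add: fs)
  qed
  have r: "red (f n) (f (Suc n))" for n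
  proof -
    have "red (f n) (nxt (f n)) \<and> \<not> Wellfounded.accp Rr (nxt (f n))"
      unfolding nxt_def by (rule someI_ex[OF notacc_step[OF A[of n]]])
    then show ?thesis by (simp add: fs)
  qed
  have "f 0 = t" by (simp add: f_def)
  with r have "\<exists>f. f 0 = t \<and> (\<forall>n. red (f n) (f (Suc n)))" by blast
  with sn show False unfolding SN_def by (elim notE)
qed

lemma SN_accp: "SN t = Wellfounded.accp Rr t" using SN_imp_accp accp_imp_SN by blast

lemma SN_intro:
  assumes "\<And>t'. red t t' \<Longrightarrow> SN t'" shows "SN t"
proof -
  have "Wellfounded.accp Rr t"
  proof (rule accp.accI)
    fix y assume "Rr y t"
    hence "red t y" by (simp add: Rr_def)
    thus "Wellfounded.accp Rr y" using assms SN_imp_accp by blast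
  qed
  thus ?thesis by (rule accp_imp_SN)
qed

lemma SN_red:
  assumes "SN t" "red t t'" shows "SN t'"
proof -
  have "Wellfounded.accp Rr t" using assms(1) by (rule SN_imp_accp)
  moreover have "Rr t' t" using assms(2) by (simp add: Rr_def)
  ultimately have "Wellfounded.accp Rr t'" by (rule accp_downward)
  thus ?thesis by (rule accp_imp_SN)
qed

lemma SN_induct[consumes 1, case_names step]:
  assumes "SN t" "\<And>t. SN t \<Longrightarrow> (\<And>t'. red t t' \<Longrightarrow> P t') \<Longrightarrow> P t"
  shows "P t"
proof -
  have "Wellfounded.accp Rr t" using assms(1) by (rule SN_imp_accp)
  then show ?thesis
  proof (induction rule: accp.induct)
    case (accI x)
    have "Wellfounded.accp Rr x" by (rule accp.accI) (rule accI.hyps)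
    hence "SN x" by (rule accp_imp_SN)
    moreover have "P t'" if "red x t'" for t' using that accI.IH by (simp add: Rr_def)
    ultimately show ?case using assms(2) by blast
  qed
qed

lemma SN_App1_aux: "Wellfounded.accp Rr s \<Longrightarrow> s = App t u \<Longrightarrow> Wellfounded.accp Rr t"
proof (induction arbitrary: t rule: accp.induct)
  case (accI x)
  show ?case
  proof (rule accp.accI)
    fix y assume "Rr y t"
    hence "Rr (App y u) x" using accI.prems by (simp add: Rr_def red.c_App1)
    thus "Wellfounded.accp Rr y" using accI.IH by blast
  qed
qed
lemma SN_App1: "SN (App t u) \<Longrightarrow> SN t" using SN_App1_aux SN_imp_accp accp_imp_SN by blast

lemma SN_Proj1_aux: "Wellfounded.accp Rr s \<Longrightarrow> s = Proj1 t \<Longrightarrow> Wellfounded.accp Rr t"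
proof (induction arbitrary: t rule: accp.induct)
  case (accI x)
  show ?case
  proof (rule accp.accI)
    fix y assume "Rr y t"
    hence "Rr (Proj1 y) x" using accI.prems by (simp add: Rr_def red.c_Proj1)
    thus "Wellfounded.accp Rr y" using accI.IH by blast
  qed
qed
lemma SN_Proj1: "SN (Proj1 t) \<Longrightarrow> SN t" using SN_Proj1_aux SN_imp_accp accp_imp_SN by blast

lemma SN_TApp_aux: "Wellfounded.accp Rr s \<Longrightarrow> s = TApp t U \<Longrightarrow> Wellfounded.accp Rr t"
proof (induction arbitrary: t rule: accp.induct)
  case (accI x)
  show ?case
  proof (rule accp.accI)
    fix y assume "Rr y t"
    hence "Rr (TApp y U) x" using accI.prems by (simp add: Rr_def red.c_TApp)
    thus "Wellfounded.accp Rr y" using accI.IH by blast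
  qed
qed
lemma SN_TApp: "SN (TApp t U) \<Longrightarrow> SN t" using SN_TApp_aux SN_imp_accp accp_imp_SN by blast

inductive_cases red_FVarE: "red (FVar x a) r"
inductive_cases red_StarE: "red Star r"
inductive_cases red_AppE: "red (App t u) r"
inductive_cases red_Proj1E: "red (Proj1 t) r"
inductive_cases red_Proj2E: "red (Proj2 t) r"
inductive_cases red_TAppE: "red (TApp t U) r"

lemma Star_normal: "\<not> red Star r"
  using star_normal[of Top r] by simp

lemma SN_Star: "SN Star" by (rule SN_intro) (simp add: Star_normal)




section \<open>Zapping a Top-variable back to the star\<close>

fun zap :: "nat \<Rightarrow> tm \<Rightarrow> tm" where
  "zap z Star = Star"
| "zap z (FVar x a) = (if x = z \<and> a = Top then Star else FVar x a)"
| "zap z (BVar i) = BVar i"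
| "zap z (Lam a t) = Lam a (zap z t)"
| "zap z (App t s) = App (zap z t) (zap z s)"
| "zap z (Pair t s) = Pair (zap z t) (zap z s)"
| "zap z (Proj1 t) = Proj1 (zap z t)"
| "zap z (Proj2 t) = Proj2 (zap z t)"
| "zap z (TLam t) = TLam (zap z t)"
| "zap z (TApp t a) = TApp (zap z t) a"

fun cnt :: "nat \<Rightarrow> tm \<Rightarrow> nat" where
  "cnt z Star = 0"
| "cnt z (FVar x a) = (if x = z \<and> a = Top then 1 else 0)"
| "cnt z (BVar i) = 0"
| "cnt z (Lam a t) = cnt z t"
| "cnt z (App t s) = cnt z t + cnt z s"
| "cnt z (Pair t s) = cnt z t + cnt z s"
| "cnt z (Proj1 t) = cnt z t"
| "cnt z (Proj2 t) = cnt z t"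
| "cnt z (TLam t) = cnt z t"
| "cnt z (TApp t a) = cnt z t"

lemma zap_opn: "zap z (opn k u t) = opn k (zap z u) (zap z t)"
  by (induction t arbitrary: k) auto
lemma zap_topn: "zap z (topn k U t) = topn k U (zap z t)"
  by (induction t arbitrary: k) auto
lemma zap_star_of[simp]: "zap z (star_of \<tau>) = star_of \<tau>" by (induction \<tau>) auto
lemma cnt_star_of[simp]: "cnt z (star_of \<tau>) = 0" by (induction \<tau>) auto
lemma zap_star_repl: "(z, Top) \<notin> fvars t \<Longrightarrow> zap z (star_repl z t) = t"
  by (induction t) auto
lemma fvars_zap: "fvars (zap z t) = fvars t - {(z, Top)}"
  by (induction t) auto
lemma names_zap: "fst ` fvars (zap z t) \<subseteq> fst ` fvars t"
  unfolding fvars_zap by auto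
lemma ftv_tm_zap[simp]: "ftv_tm (zap z t) = ftv_tm t" by (induction t) auto
lemma bvc_zap[simp]: "bvc_at k (zap z t) = bvc_at k t" by (induction t arbitrary: k) auto
lemma tyc_zap[simp]: "tyc_at k (zap z t) = tyc_at k t" by (induction t arbitrary: k) auto
lemma zap_id: "cnt z t = 0 \<Longrightarrow> zap z t = t" by (induction t) auto
lemma cnt_opn: "cnt z u = 0 \<Longrightarrow> cnt z (opn k u t) = cnt z t" by (induction t arbitrary: k) auto
lemma cnt_topn[simp]: "cnt z (topn k U t) = cnt z t" by (induction t arbitrary: k) auto
lemma zap_FVar_other[simp]: "x \<noteq> z \<Longrightarrow> zap z (FVar x a) = FVar x a" by simp

lemma has_ty_zap: "has_ty t A \<Longrightarrow> has_ty (zap z t) A"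
proof (induction rule: has_ty.induct)
  case (ty_FVar a x) then show ?case by (auto intro: has_ty.intros)
next
  case (ty_Lam a t b)
  show ?case
  proof (simp, rule ty_Lam_cof[OF ty_Lam.hyps(1), of "{z}"])
    fix x assume x: "x \<notin> {z}" "x \<notin> fst ` fvars (zap z t)"
    have "x \<notin> fst ` fvars t" using x unfolding fvars_zap by force
    with ty_Lam.IH have "has_ty (zap z (opn 0 (FVar x a) t)) b" by blast
    thus "has_ty (opn 0 (FVar x a) (zap z t)) b" using x by (simp add: zap_opn)
  qed simp
next
  case (ty_TLam t b)
  show ?case by (simp, rule has_ty.ty_TLam) (use ty_TLam.IH in \<open>auto simp: zap_topn\<close>)
next
  case ty_Star then show ?case by (simp add: has_ty.ty_Star)
next
  case (ty_App t a' b u) then show ?case by (auto intro: has_ty.ty_App)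
next
  case (ty_Pair t a' u b) then show ?case by (auto intro: has_ty.ty_Pair)
next
  case (ty_Proj1 t a' b) then show ?case by (auto intro: has_ty.ty_Proj1)
next
  case (ty_Proj2 t a' b) then show ?case by (auto intro: has_ty.ty_Proj2)
next
  case (ty_TApp t b U) then show ?case by (auto intro: has_ty.ty_TApp)
qed

lemma star_repl_opn: "star_repl z (opn k u t) = opn k (star_repl z u) (star_repl z t)"
  by (induction t arbitrary: k) auto
lemma star_repl_topn: "star_repl z (topn k U t) = topn k U (star_repl z t)"
  by (induction t arbitrary: k) auto
lemma fvars_star_repl: "fvars t \<subseteq> fvars (star_repl z t)" by (induction t) auto
lemma ftv_tm_star_repl[simp]: "ftv_tm (star_repl z t) = ftv_tm t" by (induction t) auto

lemma has_ty_star_repl: "has_ty t A \<Longrightarrow> has_ty (star_repl z t) A"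
proof (induction rule: has_ty.induct)
  case ty_Star then show ?case by (auto intro: has_ty.ty_FVar)
next
  case (ty_FVar a x) then show ?case by (auto intro: has_ty.intros)
next
  case (ty_Lam a t b)
  show ?case
  proof (simp, rule has_ty.ty_Lam[OF ty_Lam.hyps(1)])
    fix x assume x: "x \<notin> fst ` fvars (star_repl z t)"
    hence "x \<notin> fst ` fvars t" using fvars_star_repl[of t z] by blast
    with ty_Lam.IH have "has_ty (star_repl z (opn 0 (FVar x a) t)) b" by blast
    thus "has_ty (opn 0 (FVar x a) (star_repl z t)) b" by (simp add: star_repl_opn)
  qed
next
  case (ty_TLam t b)
  show ?case by (simp, rule has_ty.ty_TLam) (use ty_TLam.IH in \<open>auto simp: star_repl_topn\<close>)
next
  case (ty_App t a' b u) then show ?case by (auto intro: has_ty.ty_App)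
next
  case (ty_Pair t a' u b) then show ?case by (auto intro: has_ty.ty_Pair)
next
  case (ty_Proj1 t a' b) then show ?case by (auto intro: has_ty.ty_Proj1)
next
  case (ty_Proj2 t a' b) then show ?case by (auto intro: has_ty.ty_Proj2)
next
  case (ty_TApp t b U) then show ?case by (auto intro: has_ty.ty_TApp)
qed

lemma zap_sim: "red s s' \<Longrightarrow> red (zap z s) (zap z s') \<or> (zap z s = zap z s' \<and> cnt z s' < cnt z s)"
proof (induction rule: red.induct)
  case (beta a t v) then show ?case by (simp add: zap_opn red.beta)
next
  case (proj1 u v) then show ?case by (simp add: red.proj1)
next
  case (proj2 u v) then show ?case by (simp add: red.proj2)
next
  case (eta t a) then show ?case by (simp add: red.eta)
next
  case (SP u) then show ?case by (simp add: red.SP)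
next
  case (gentop u \<tau>)
  show ?case
  proof (cases "zap z u = star_of \<tau>")
    case True
    hence "zap z u \<noteq> u" using gentop by auto
    hence "cnt z u \<noteq> 0" using zap_id by metis
    with True show ?thesis by simp
  next
    case False
    then show ?thesis using red.gentop[OF has_ty_zap[OF gentop(1)] gentop(2)] by simp
  qed
next
  case (eta_top \<tau> t) then show ?case by (simp add: red.eta_top)
next
  case (pair_top1 u a \<tau>) then show ?case using red.pair_top1[OF has_ty_zap[OF pair_top1(1)] pair_top1(2)] by simp
next
  case (pair_top2 u \<tau> b) then show ?case using red.pair_top2[OF has_ty_zap[OF pair_top2(1)] pair_top2(2)] by simp
next
  case (beta2 t U) then show ?case by (simp add: zap_topn red.beta2)
next
  case (eta2 s) then show ?case by (simp add: red.eta2)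
next
  case (c_Lam t t' a)
  obtain x where x: "x \<notin> fst ` fvars t \<union> fst ` fvars t' \<union> {z}"
    using fresh_name[of "fst ` fvars t \<union> fst ` fvars t' \<union> {z}"] by auto
  hence xz: "x \<noteq> z" by auto
  have e1: "zap z (opn 0 (FVar x a) t) = opn 0 (FVar x a) (zap z t)" using xz by (simp add: zap_opn)
  have e2: "zap z (opn 0 (FVar x a) t') = opn 0 (FVar x a) (zap z t')" using xz by (simp add: zap_opn)
  have c1: "cnt z (opn 0 (FVar x a) t) = cnt z t" using xz by (simp add: cnt_opn)
  have c2: "cnt z (opn 0 (FVar x a) t') = cnt z t'" using xz by (simp add: cnt_opn)
  have xf: "x \<notin> fst ` fvars (zap z t) \<union> fst ` fvars (zap z t')"
    using x names_zap[of z t] names_zap[of z t'] by blast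
  from c_Lam.IH[of x] x
  have "red (zap z (opn 0 (FVar x a) t)) (zap z (opn 0 (FVar x a) t')) \<or>
        (zap z (opn 0 (FVar x a) t) = zap z (opn 0 (FVar x a) t') \<and>
         cnt z (opn 0 (FVar x a) t') < cnt z (opn 0 (FVar x a) t))" by blast
  then show ?case
  proof
    assume "red (zap z (opn 0 (FVar x a) t)) (zap z (opn 0 (FVar x a) t'))"
    then have "red (Lam a (zap z t)) (Lam a (zap z t'))" using e1 e2 xf c_Lam_ex by metis
    then show ?thesis by simp
  next
    assume h: "zap z (opn 0 (FVar x a) t) = zap z (opn 0 (FVar x a) t') \<and>
         cnt z (opn 0 (FVar x a) t') < cnt z (opn 0 (FVar x a) t)"
    then have "zap z t = zap z t'" using e1 e2 xf opn_inj by (metis Un_iff)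
    then show ?thesis using h c1 c2 by simp
  qed
next
  case (c_TLam t t')
  obtain X where X: "X \<notin> ftv_tm t \<union> ftv_tm t'"
    using fresh_name[of "ftv_tm t \<union> ftv_tm t'"] by auto
  from c_TLam.IH[of X] X
  have "red (zap z (topn 0 (TFree X) t)) (zap z (topn 0 (TFree X) t')) \<or>
        (zap z (topn 0 (TFree X) t) = zap z (topn 0 (TFree X) t') \<and>
         cnt z (topn 0 (TFree X) t') < cnt z (topn 0 (TFree X) t))" by blast
  then show ?case
  proof
    assume "red (zap z (topn 0 (TFree X) t)) (zap z (topn 0 (TFree X) t'))"
    then have "red (TLam (zap z t)) (TLam (zap z t'))" using X c_TLam_ex[of X "zap z t" "zap z t'"]
      by (simp add: zap_topn)
    then show ?thesis by simp
  next
    assume h: "zap z (topn 0 (TFree X) t) = zap z (topn 0 (TFree X) t') \<and>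
         cnt z (topn 0 (TFree X) t') < cnt z (topn 0 (TFree X) t)"
    then have "topn 0 (TFree X) (zap z t) = topn 0 (TFree X) (zap z t')" by (simp add: zap_topn)
    then have "zap z t = zap z t'" using X topn_inj[of X "zap z t" "zap z t'"] by simp
    then show ?thesis using h by simp
  qed
next
  case (c_App1 t t' u) then show ?case by (auto intro: red.c_App1)
next
  case (c_App2 u u' t) then show ?case by (auto intro: red.c_App2)
next
  case (c_Pair1 t t' u) then show ?case by (auto intro: red.c_Pair1)
next
  case (c_Pair2 u u' t) then show ?case by (auto intro: red.c_Pair2)
next
  case (c_Proj1 t t') then show ?case by (auto intro: red.c_Proj1)
next
  case (c_Proj2 t t') then show ?case by (auto intro: red.c_Proj2)
next
  case (c_TApp t t' U) then show ?case by (auto intro: red.c_TApp)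
qed

lemma SN_zap: "SN t \<Longrightarrow> zap z s = t \<Longrightarrow> SN s"
proof (induction arbitrary: s rule: SN_induct)
  case (step t)
  show ?case using step.prems
  proof (induction "cnt z s" arbitrary: s rule: less_induct)
    case less
    show ?case
    proof (rule SN_intro)
      fix s' assume r: "red s s'"
      from zap_sim[OF r, of z] show "SN s'"
      proof
        assume "red (zap z s) (zap z s')"
        then show "SN s'" using step.IH less.prems by blast
      next
        assume "zap z s = zap z s' \<and> cnt z s' < cnt z s"
        then show "SN s'" using less.hyps less.prems by metis
      qed
    qed
  qed
qed

lemma SN_star_repl: "SN t \<Longrightarrow> (z, Top) \<notin> fvars t \<Longrightarrow> SN (star_repl z t)"
  using SN_zap zap_star_repl by blast




inductive pz :: "nat \<Rightarrow> tm \<Rightarrow> tm \<Rightarrow> bool" for z where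
  pz_refl: "pz z t t"
| pz_zap: "pz z (FVar z Top) Star"
| pz_Lam: "pz z t t' \<Longrightarrow> pz z (Lam a t) (Lam a t')"
| pz_App: "pz z t t' \<Longrightarrow> pz z u u' \<Longrightarrow> pz z (App t u) (App t' u')"
| pz_Pair: "pz z t t' \<Longrightarrow> pz z u u' \<Longrightarrow> pz z (Pair t u) (Pair t' u')"
| pz_Proj1: "pz z t t' \<Longrightarrow> pz z (Proj1 t) (Proj1 t')"
| pz_Proj2: "pz z t t' \<Longrightarrow> pz z (Proj2 t) (Proj2 t')"
| pz_TLam: "pz z t t' \<Longrightarrow> pz z (TLam t) (TLam t')"
| pz_TApp: "pz z t t' \<Longrightarrow> pz z (TApp t U) (TApp t' U)"

inductive oz :: "nat \<Rightarrow> tm \<Rightarrow> tm \<Rightarrow> bool" for z where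
  oz_base: "oz z (FVar z Top) Star"
| oz_Lam: "oz z t t' \<Longrightarrow> oz z (Lam a t) (Lam a t')"
| oz_App1: "oz z t t' \<Longrightarrow> oz z (App t u) (App t' u)"
| oz_App2: "oz z u u' \<Longrightarrow> oz z (App t u) (App t u')"
| oz_Pair1: "oz z t t' \<Longrightarrow> oz z (Pair t u) (Pair t' u)"
| oz_Pair2: "oz z u u' \<Longrightarrow> oz z (Pair t u) (Pair t u')"
| oz_Proj1: "oz z t t' \<Longrightarrow> oz z (Proj1 t) (Proj1 t')"
| oz_Proj2: "oz z t t' \<Longrightarrow> oz z (Proj2 t) (Proj2 t')"
| oz_TLam: "oz z t t' \<Longrightarrow> oz z (TLam t) (TLam t')"
| oz_TApp: "oz z t t' \<Longrightarrow> oz z (TApp t U) (TApp t' U)"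

lemma oz_opn: "oz z t t' \<Longrightarrow> oz z (opn k u t) (opn k u t')"
  by (induction arbitrary: k rule: oz.induct) (auto intro: oz.intros)
lemma oz_topn: "oz z t t' \<Longrightarrow> oz z (topn k U t) (topn k U t')"
  by (induction arbitrary: k rule: oz.induct) (auto intro: oz.intros)

lemma oz_red: "oz z t t' \<Longrightarrow> red t t'"
proof (induction "size t" arbitrary: t t' rule: less_induct)
  case less
  from less.prems show ?case
  proof (cases rule: oz.cases)
    case oz_base
    have "has_ty (FVar z Top) Top" by (rule has_ty.ty_FVar) simp
    then show ?thesis using red.gentop[of "FVar z Top" Top] oz_base by simp
  next
    case (oz_Lam b b' a)
    show ?thesis unfolding oz_Lam
    proof (rule red.c_Lam)
      fix x
      have "oz z (opn 0 (FVar x a) b) (opn 0 (FVar x a) b')" using oz_Lam by (simp add: oz_opn)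
      moreover have "size (opn 0 (FVar x a) b) < size t" using oz_Lam by simp
      ultimately show "red (opn 0 (FVar x a) b) (opn 0 (FVar x a) b')" using less.hyps by blast
    qed
  next
    case (oz_TLam b b')
    show ?thesis unfolding oz_TLam
    proof (rule red.c_TLam)
      fix X
      have "oz z (topn 0 (TFree X) b) (topn 0 (TFree X) b')" using oz_TLam by (simp add: oz_topn)
      moreover have "size (topn 0 (TFree X) b) < size t" using oz_TLam by simp
      ultimately show "red (topn 0 (TFree X) b) (topn 0 (TFree X) b')" using less.hyps by blast
    qed
  next
    case (oz_App1 b b' u) then show ?thesis using less.hyps by (auto intro: red.c_App1)
  next
    case (oz_App2 u u' b) then show ?thesis using less.hyps by (auto intro: red.c_App2)
  next
    case (oz_Pair1 b b' u) then show ?thesis using less.hyps by (auto intro: red.c_Pair1)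
  next
    case (oz_Pair2 u u' b) then show ?thesis using less.hyps by (auto intro: red.c_Pair2)
  next
    case (oz_Proj1 b b') then show ?thesis using less.hyps by (auto intro: red.c_Proj1)
  next
    case (oz_Proj2 b b') then show ?thesis using less.hyps by (auto intro: red.c_Proj2)
  next
    case (oz_TApp b b' U) then show ?thesis using less.hyps by (auto intro: red.c_TApp)
  qed
qed

lemma pz_step: "pz z q s \<Longrightarrow> q \<noteq> s \<Longrightarrow> \<exists>q'. oz z q q' \<and> pz z q' s \<and> cnt z q' < cnt z q"
proof (induction rule: pz.induct)
  case pz_zap then show ?case by (auto intro: oz.intros pz.intros)
next
  case (pz_Lam t t' a) then show ?case by (auto intro: oz.intros pz.intros)
next
  case (pz_App t t' u u')
  show ?case
  proof (cases "t = t'")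
    case True
    with pz_App obtain u1 where "oz z u u1" "pz z u1 u'" "cnt z u1 < cnt z u" by auto
    then show ?thesis using True pz_App by (auto intro!: exI[of _ "App t u1"] intro: oz.intros pz.intros)
  next
    case False
    with pz_App obtain t1 where "oz z t t1" "pz z t1 t'" "cnt z t1 < cnt z t" by auto
    then show ?thesis using pz_App by (auto intro!: exI[of _ "App t1 u"] intro: oz.intros pz.intros)
  qed
next
  case (pz_Pair t t' u u')
  show ?case
  proof (cases "t = t'")
    case True
    with pz_Pair obtain u1 where "oz z u u1" "pz z u1 u'" "cnt z u1 < cnt z u" by auto
    then show ?thesis using True pz_Pair by (auto intro!: exI[of _ "Pair t u1"] intro: oz.intros pz.intros)
  next
    case False
    with pz_Pair obtain t1 where "oz z t t1" "pz z t1 t'" "cnt z t1 < cnt z t" by auto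
    then show ?thesis using pz_Pair by (auto intro!: exI[of _ "Pair t1 u"] intro: oz.intros pz.intros)
  qed
next
  case (pz_Proj1 t t') then show ?case by (auto intro: oz.intros pz.intros)
next
  case (pz_Proj2 t t') then show ?case by (auto intro: oz.intros pz.intros)
next
  case (pz_TLam t t') then show ?case by (auto intro: oz.intros pz.intros)
next
  case (pz_TApp t t' U) then show ?case by (auto intro: oz.intros pz.intros)
qed simp

lemma pz_closed:
  "\<forall>a b. a \<in> R \<longrightarrow> red a b \<longrightarrow> b \<in> R \<Longrightarrow> pz z q s \<Longrightarrow> q \<in> R \<Longrightarrow> s \<in> R"
proof (induction "cnt z q" arbitrary: q rule: less_induct)
  case less
  show ?case
  proof (cases "q = s")
    case True then show ?thesis using less by simp
  next
    case False
    then obtain q' where "oz z q q'" "pz z q' s" "cnt z q' < cnt z q" using pz_step less.prems by blast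
    moreover have "q' \<in> R" using less.prems(1,3) oz_red[OF \<open>oz z q q'\<close>] by blast
    ultimately show ?thesis using less.hyps less.prems(1) by blast
  qed
qed

lemma pz_star_repl_zap: "pz z (star_repl z (zap z s)) s"
  by (induction s) (auto intro: pz.intros)
lemma pz_zap_full: "pz z u (zap z u)"
  by (induction u) (auto intro: pz.intros)

lemma RC_cl: "RC A R \<Longrightarrow> q \<in> R \<Longrightarrow> red q q' \<Longrightarrow> q' \<in> R"
  unfolding RC_def by blast

lemma RC_PV: assumes "RC A R" "zap z s \<in> R" shows "s \<in> R"
proof -
  have "(z, Top) \<notin> fvars (zap z s)" by (simp add: fvars_zap)
  hence "star_repl z (zap z s) \<in> R" using assms unfolding RC_def variant_closed_def by blast
  have cl: "\<forall>a b. a \<in> R \<longrightarrow> red a b \<longrightarrow> b \<in> R" using RC_cl[OF assms(1)] by blast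
  have "pz z (star_repl z (zap z s)) s" by (rule pz_star_repl_zap)
  thus ?thesis using pz_closed[OF cl] \<open>star_repl z (zap z s) \<in> R\<close> by blast
qed

lemma RC_zap: assumes "RC A R" "u \<in> R" shows "zap z u \<in> R"
proof -
  have cl: "\<forall>a b. a \<in> R \<longrightarrow> red a b \<longrightarrow> b \<in> R" using RC_cl[OF assms(1)] by blast
  have "pz z u (zap z u)" by (rule pz_zap_full)
  thus ?thesis using pz_closed[OF cl] assms(2) by blast
qed




section \<open>Reducibility candidates: basic facts\<close>

lemma RC_ty: "RC A R \<Longrightarrow> t \<in> R \<Longrightarrow> has_ty t A" unfolding RC_def by blast
lemma RC_star: "RC A R \<Longrightarrow> iso A \<Longrightarrow> star_of A \<in> R" unfolding RC_def by blast
lemma RC_var: "RC A R \<Longrightarrow> t \<in> R \<Longrightarrow> (z, Top) \<notin> fvars t \<Longrightarrow> star_repl z t \<in> R"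
  unfolding RC_def variant_closed_def by blast
lemma RC_SN: "RC A R \<Longrightarrow> t \<in> R \<Longrightarrow> SN t" unfolding RC_def by blast
lemma RC_CR3: "RC A R \<Longrightarrow> has_ty t A \<Longrightarrow> neutral t \<Longrightarrow> (\<And>t'. red t t' \<Longrightarrow> t' \<in> R) \<Longrightarrow> t \<in> R"
  unfolding RC_def by blast
lemma RC_intro:
  assumes "\<And>t. t \<in> R \<Longrightarrow> has_ty t A"
    "iso A \<Longrightarrow> star_of A \<in> R"
    "\<And>t z. t \<in> R \<Longrightarrow> (z, Top) \<notin> fvars t \<Longrightarrow> star_repl z t \<in> R"
    "\<And>t. t \<in> R \<Longrightarrow> SN t"
    "\<And>t t'. t \<in> R \<Longrightarrow> red t t' \<Longrightarrow> t' \<in> R"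
    "\<And>t. has_ty t A \<Longrightarrow> neutral t \<Longrightarrow> (\<And>t'. red t t' \<Longrightarrow> t' \<in> R) \<Longrightarrow> t \<in> R"
  shows "RC A R"
  unfolding RC_def variant_closed_def using assms by blast

lemma gentop_in: "RC A R \<Longrightarrow> has_ty t A \<Longrightarrow> has_ty t \<tau> \<Longrightarrow> iso \<tau> \<Longrightarrow> star_of \<tau> \<in> R"
  using ty_unique RC_star by metis

lemma red_FVar_inv: "red (FVar x a) r \<Longrightarrow> \<exists>\<tau>. has_ty (FVar x a) \<tau> \<and> iso \<tau> \<and> r = star_of \<tau>"
  by (erule red_FVarE) auto
lemma red_App_inv: "red (App t u) r \<Longrightarrow> (\<exists>a b. t = Lam a b \<and> r = opn 0 u b) \<or> (\<exists>t'. red t t' \<and> r = App t' u)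
   \<or> (\<exists>u'. red u u' \<and> r = App t u') \<or> (\<exists>\<tau>. has_ty (App t u) \<tau> \<and> iso \<tau> \<and> r = star_of \<tau>)"
  by (erule red_AppE) auto
lemma red_Proj1_inv: "red (Proj1 t) r \<Longrightarrow> (\<exists>a b. t = Pair a b \<and> r = a) \<or> (\<exists>t'. red t t' \<and> r = Proj1 t')
   \<or> (\<exists>\<tau>. has_ty (Proj1 t) \<tau> \<and> iso \<tau> \<and> r = star_of \<tau>)"
  by (erule red_Proj1E) auto
lemma red_Proj2_inv: "red (Proj2 t) r \<Longrightarrow> (\<exists>a b. t = Pair a b \<and> r = b) \<or> (\<exists>t'. red t t' \<and> r = Proj2 t')
   \<or> (\<exists>\<tau>. has_ty (Proj2 t) \<tau> \<and> iso \<tau> \<and> r = star_of \<tau>)"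
  by (erule red_Proj2E) auto
lemma red_TApp_inv: "red (TApp t U) r \<Longrightarrow> (\<exists>b. t = TLam b \<and> r = topn 0 U b) \<or> (\<exists>t'. red t t' \<and> r = TApp t' U)
   \<or> (\<exists>\<tau>. has_ty (TApp t U) \<tau> \<and> iso \<tau> \<and> r = star_of \<tau>)"
  by (erule red_TAppE) auto

lemma var_in: assumes "RC A R" "is_type A" shows "FVar x A \<in> R"
proof (rule RC_CR3[OF assms(1)])
  show "has_ty (FVar x A) A" using assms(2) by (rule has_ty.ty_FVar)
  fix r assume "red (FVar x A) r"
  then obtain \<tau> where "has_ty (FVar x A) \<tau>" "iso \<tau>" "r = star_of \<tau>" using red_FVar_inv by blast
  then show "r \<in> R" using gentop_in[OF assms(1) \<open>has_ty (FVar x A) A\<close>] by blast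
qed simp

lemma RC_Top: "RC Top {t. has_ty t Top \<and> SN t}"
proof (rule RC_intro)
  show "star_of Top \<in> {t. has_ty t Top \<and> SN t}" by (simp add: has_ty.ty_Star SN_Star)
next
  fix t z assume "t \<in> {t. has_ty t Top \<and> SN t}" "(z, Top) \<notin> fvars t"
  then show "star_repl z t \<in> {t. has_ty t Top \<and> SN t}"
    using has_ty_star_repl SN_star_repl by blast
next
  fix t t' assume "t \<in> {t. has_ty t Top \<and> SN t}" "red t t'"
  then show "t' \<in> {t. has_ty t Top \<and> SN t}" using subject_red SN_red by blast
next
  fix t assume "has_ty t Top" "(\<And>t'. red t t' \<Longrightarrow> t' \<in> {t. has_ty t Top \<and> SN t})"
  then show "t \<in> {t. has_ty t Top \<and> SN t}" using SN_intro by blast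
qed auto

lemma RC_Arr:
  assumes RA: "RC A RA" and RB: "RC B RB" and tA: "is_type A" and tB: "is_type B"
  shows "RC (Arr A B) {t. has_ty t (Arr A B) \<and> (\<forall>u\<in>RA. App t u \<in> RB)}" (is "RC _ ?S")
proof (rule RC_intro)
  fix t assume "t \<in> ?S" then show "has_ty t (Arr A B)" by blast
next
  assume iso: "iso (Arr A B)"
  hence isoB: "iso B" by simp
  have tAB: "is_type (Arr A B)" using tA tB by simp
  have ty0: "has_ty (star_of (Arr A B)) (Arr A B)" by (rule star_of_ty[OF iso tAB])
  hence ty: "has_ty (Lam A (star_of B)) (Arr A B)" by simp
  have "App (Lam A (star_of B)) u \<in> RB" if "u \<in> RA" for u
  proof -
    have "SN u" using RC_SN[OF RA that] .
    then show ?thesis using that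
    proof (induction rule: SN_induct)
      case (step u)
      show ?case
      proof (rule RC_CR3[OF RB])
        show hty: "has_ty (App (Lam A (star_of B)) u) B"
          using ty RC_ty[OF RA step.prems] by (auto intro: has_ty.ty_App)
        fix r assume "red (App (Lam A (star_of B)) u) r"
        from red_App_inv[OF this] show "r \<in> RB"
        proof (elim disjE exE conjE)
          fix a b assume "Lam A (star_of B) = Lam a b" "r = opn 0 u b"
          then show ?thesis using RC_star[OF RB isoB] by auto
        next
          fix t' assume "red (Lam A (star_of B)) t'"
          then show ?thesis using star_normal[OF iso tAB] by simp
        next
          fix u' assume "red u u'" "r = App (Lam A (star_of B)) u'"
          then show ?thesis using step.IH RC_cl[OF RA step.prems] by blast
        next
          fix \<tau> assume "has_ty (App (Lam A (star_of B)) u) \<tau>" "iso \<tau>" "r = star_of \<tau>"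
          then show ?thesis using gentop_in[OF RB hty] by blast
        qed
      qed simp
    qed
  qed
  then show "star_of (Arr A B) \<in> ?S" using ty0 by simp
next
  fix t z assume t: "t \<in> ?S" and z: "(z, Top) \<notin> fvars t"
  have "App (star_repl z t) u \<in> RB" if "u \<in> RA" for u
  proof (rule RC_PV[OF RB, of z])
    have "zap z u \<in> RA" using RC_zap[OF RA that] .
    then have "App t (zap z u) \<in> RB" using t by blast
    then show "zap z (App (star_repl z t) u) \<in> RB" using z by (simp add: zap_star_repl)
  qed
  then show "star_repl z t \<in> ?S" using t has_ty_star_repl by blast
next
  fix t assume t: "t \<in> ?S"
  obtain x :: nat where True by simp
  have "FVar x A \<in> RA" using var_in[OF RA tA] .
  then have "App t (FVar x A) \<in> RB" using t by blast
  then show "SN t" using RC_SN[OF RB] SN_App1 by blast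
next
  fix t t' assume t: "t \<in> ?S" and r: "red t t'"
  have "has_ty t' (Arr A B)" using t r subject_red by blast
  moreover have "App t' u \<in> RB" if "u \<in> RA" for u
    using t that RC_cl[OF RB _ red.c_App1[OF r]] by blast
  ultimately show "t' \<in> ?S" by blast
next
  fix t assume ht: "has_ty t (Arr A B)" and nt: "neutral t" and hr: "\<And>t'. red t t' \<Longrightarrow> t' \<in> ?S"
  have "App t u \<in> RB" if "u \<in> RA" for u
  proof -
    have "SN u" using RC_SN[OF RA that] .
    then show ?thesis using that
    proof (induction rule: SN_induct)
      case (step u)
      show ?case
      proof (rule RC_CR3[OF RB])
        show hty: "has_ty (App t u) B" using ht RC_ty[OF RA step.prems] by (auto intro: has_ty.ty_App)
        fix r assume "red (App t u) r"
        from red_App_inv[OF this] show "r \<in> RB"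
        proof (elim disjE exE conjE)
          fix a b assume "t = Lam a b" then show ?thesis using nt by simp
        next
          fix t' assume "red t t'" "r = App t' u"
          then show ?thesis using hr step.prems by blast
        next
          fix u' assume "red u u'" "r = App t u'"
          then show ?thesis using step.IH RC_cl[OF RA step.prems] by blast
        next
          fix \<tau> assume "has_ty (App t u) \<tau>" "iso \<tau>" "r = star_of \<tau>"
          then show ?thesis using gentop_in[OF RB hty] by blast
        qed
      qed simp
    qed
  qed
  then show "t \<in> ?S" using ht by blast
qed




lemma RC_Prod:
  assumes RA: "RC A RA" and RB: "RC B RB" and tA: "is_type A" and tB: "is_type B"
  shows "RC (Prod A B) {t. has_ty t (Prod A B) \<and> Proj1 t \<in> RA \<and> Proj2 t \<in> RB}" (is "RC _ ?S")
proof (rule RC_intro)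
  fix t assume "t \<in> ?S" then show "has_ty t (Prod A B)" by blast
next
  assume iso: "iso (Prod A B)"
  have tAB: "is_type (Prod A B)" using tA tB by simp
  have ty0: "has_ty (star_of (Prod A B)) (Prod A B)" by (rule star_of_ty[OF iso tAB])
  hence ty: "has_ty (Pair (star_of A) (star_of B)) (Prod A B)" by simp
  have nrm: "\<not> red (Pair (star_of A) (star_of B)) t'" for t'
    using star_normal[OF iso tAB] by simp
  have "Proj1 (Pair (star_of A) (star_of B)) \<in> RA"
  proof (rule RC_CR3[OF RA])
    show hty: "has_ty (Proj1 (Pair (star_of A) (star_of B))) A" using ty by (rule has_ty.ty_Proj1)
    fix r assume "red (Proj1 (Pair (star_of A) (star_of B))) r"
    from red_Proj1_inv[OF this] show "r \<in> RA"
    proof (elim disjE exE conjE)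
      fix a b assume "Pair (star_of A) (star_of B) = Pair a b" "r = a"
      then show ?thesis using RC_star[OF RA] iso by auto
    next
      fix t' assume "red (Pair (star_of A) (star_of B)) t'" then show ?thesis using nrm by blast
    next
      fix \<tau> assume "has_ty (Proj1 (Pair (star_of A) (star_of B))) \<tau>" "iso \<tau>" "r = star_of \<tau>"
      then show ?thesis using gentop_in[OF RA hty] by blast
    qed
  qed simp
  moreover have "Proj2 (Pair (star_of A) (star_of B)) \<in> RB"
  proof (rule RC_CR3[OF RB])
    show hty: "has_ty (Proj2 (Pair (star_of A) (star_of B))) B" using ty by (rule has_ty.ty_Proj2)
    fix r assume "red (Proj2 (Pair (star_of A) (star_of B))) r"
    from red_Proj2_inv[OF this] show "r \<in> RB"
    proof (elim disjE exE conjE)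
      fix a b assume "Pair (star_of A) (star_of B) = Pair a b" "r = b"
      then show ?thesis using RC_star[OF RB] iso by auto
    next
      fix t' assume "red (Pair (star_of A) (star_of B)) t'" then show ?thesis using nrm by blast
    next
      fix \<tau> assume "has_ty (Proj2 (Pair (star_of A) (star_of B))) \<tau>" "iso \<tau>" "r = star_of \<tau>"
      then show ?thesis using gentop_in[OF RB hty] by blast
    qed
  qed simp
  ultimately show "star_of (Prod A B) \<in> ?S" using ty0 by simp
next
  fix t z assume t: "t \<in> ?S" and z: "(z, Top) \<notin> fvars t"
  have "star_repl z (Proj1 t) \<in> RA" using RC_var[OF RA, of "Proj1 t" z] t z by simp
  moreover have "star_repl z (Proj2 t) \<in> RB" using RC_var[OF RB, of "Proj2 t" z] t z by simp
  ultimately show "star_repl z t \<in> ?S" using t has_ty_star_repl by auto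
next
  fix t assume t: "t \<in> ?S"
  then show "SN t" using RC_SN[OF RA] SN_Proj1 by blast
next
  fix t t' assume t: "t \<in> ?S" and r: "red t t'"
  have "has_ty t' (Prod A B)" using t r subject_red by blast
  moreover have "Proj1 t' \<in> RA" using t RC_cl[OF RA _ red.c_Proj1[OF r]] by blast
  moreover have "Proj2 t' \<in> RB" using t RC_cl[OF RB _ red.c_Proj2[OF r]] by blast
  ultimately show "t' \<in> ?S" by blast
next
  fix t assume ht: "has_ty t (Prod A B)" and nt: "neutral t" and hr: "\<And>t'. red t t' \<Longrightarrow> t' \<in> ?S"
  have "Proj1 t \<in> RA"
  proof (rule RC_CR3[OF RA])
    show hty: "has_ty (Proj1 t) A" using ht by (rule has_ty.ty_Proj1)
    fix r assume "red (Proj1 t) r"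
    from red_Proj1_inv[OF this] show "r \<in> RA"
    proof (elim disjE exE conjE)
      fix a b assume "t = Pair a b" then show ?thesis using nt by simp
    next
      fix t' assume "red t t'" "r = Proj1 t'" then show ?thesis using hr by blast
    next
      fix \<tau> assume "has_ty (Proj1 t) \<tau>" "iso \<tau>" "r = star_of \<tau>"
      then show ?thesis using gentop_in[OF RA hty] by blast
    qed
  qed simp
  moreover have "Proj2 t \<in> RB"
  proof (rule RC_CR3[OF RB])
    show hty: "has_ty (Proj2 t) B" using ht by (rule has_ty.ty_Proj2)
    fix r assume "red (Proj2 t) r"
    from red_Proj2_inv[OF this] show "r \<in> RB"
    proof (elim disjE exE conjE)
      fix a b assume "t = Pair a b" then show ?thesis using nt by simp
    next
      fix t' assume "red t t'" "r = Proj2 t'" then show ?thesis using hr by blast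
    next
      fix \<tau> assume "has_ty (Proj2 t) \<tau>" "iso \<tau>" "r = star_of \<tau>"
      then show ?thesis using gentop_in[OF RB hty] by blast
    qed
  qed simp
  ultimately show "t \<in> ?S" using ht by blast
qed

lemma RC_All:
  assumes tB: "is_type (All B)"
    and RF: "\<And>p S. is_type p \<Longrightarrow> RC p S \<Longrightarrow> RC (topen_at 0 p B) (F p S)"
  shows "RC (All B) {t. has_ty t (All B) \<and> (\<forall>p S. is_type p \<longrightarrow> RC p S \<longrightarrow> TApp t p \<in> F p S)}"
    (is "RC _ ?S")
proof (rule RC_intro)
  fix t assume "t \<in> ?S" then show "has_ty t (All B)" by blast
next
  assume iso: "iso (All B)"
  have ty0: "has_ty (star_of (All B)) (All B)" by (rule star_of_ty[OF iso tB])
  hence ty: "has_ty (TLam (star_of B)) (All B)" by simp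
  have nrm: "\<not> red (TLam (star_of B)) t'" for t'
    using star_normal[OF iso tB] by simp
  have "TApp (TLam (star_of B)) p \<in> F p S" if p: "is_type p" "RC p S" for p S
  proof (rule RC_CR3[OF RF[OF p]])
    show hty: "has_ty (TApp (TLam (star_of B)) p) (topen_at 0 p B)"
      using ty p(1) by (rule has_ty.ty_TApp)
    fix r assume "red (TApp (TLam (star_of B)) p) r"
    from red_TApp_inv[OF this] show "r \<in> F p S"
    proof (elim disjE exE conjE)
      fix b assume "TLam (star_of B) = TLam b" "r = topn 0 p b"
      hence "r = topn 0 p (star_of B)" by simp
      hence "r = star_of (topen_at 0 p B)" using iso by (simp add: topn_star_of)
      moreover have "iso (topen_at 0 p B)" using iso by (simp add: iso_topen)
      ultimately show ?thesis using RC_star[OF RF[OF p]] by simp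
    next
      fix t' assume "red (TLam (star_of B)) t'" then show ?thesis using nrm by blast
    next
      fix \<tau> assume "has_ty (TApp (TLam (star_of B)) p) \<tau>" "iso \<tau>" "r = star_of \<tau>"
      then show ?thesis using gentop_in[OF RF[OF p] hty] by blast
    qed
  qed simp
  then show "star_of (All B) \<in> ?S" using ty0 by simp
next
  fix t z assume t: "t \<in> ?S" and z: "(z, Top) \<notin> fvars t"
  have "TApp (star_repl z t) p \<in> F p S" if p: "is_type p" "RC p S" for p S
    using RC_var[OF RF[OF p], of "TApp t p" z] t z p by simp
  then show "star_repl z t \<in> ?S" using t has_ty_star_repl by auto
next
  fix t assume t: "t \<in> ?S"
  have rt: "RC Top {t. has_ty t Top \<and> SN t}" by (rule RC_Top)
  have tt: "is_type Top" by simp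
  have "TApp t Top \<in> F Top {t. has_ty t Top \<and> SN t}" using t rt tt by blast
  moreover have "RC (topen_at 0 Top B) (F Top {t. has_ty t Top \<and> SN t})" by (rule RF[OF tt rt])
  ultimately have "SN (TApp t Top)" by (rule RC_SN[rotated])
  then show "SN t" by (rule SN_TApp)
next
  fix t t' assume t: "t \<in> ?S" and r: "red t t'"
  have "has_ty t' (All B)" using t r subject_red by blast
  moreover have "TApp t' p \<in> F p S" if p: "is_type p" "RC p S" for p S
    using t p RC_cl[OF RF[OF p] _ red.c_TApp[OF r]] by blast
  ultimately show "t' \<in> ?S" by blast
next
  fix t assume ht: "has_ty t (All B)" and nt: "neutral t" and hr: "\<And>t'. red t t' \<Longrightarrow> t' \<in> ?S"
  have "TApp t p \<in> F p S" if p: "is_type p" "RC p S" for p S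
  proof (rule RC_CR3[OF RF[OF p]])
    show hty: "has_ty (TApp t p) (topen_at 0 p B)" using ht p(1) by (rule has_ty.ty_TApp)
    fix r assume "red (TApp t p) r"
    from red_TApp_inv[OF this] show "r \<in> F p S"
    proof (elim disjE exE conjE)
      fix b assume "t = TLam b" then show ?thesis using nt by simp
    next
      fix t' assume "red t t'" "r = TApp t' p" then show ?thesis using hr p by blast
    next
      fix \<tau> assume "has_ty (TApp t p) \<tau>" "iso \<tau>" "r = star_of \<tau>"
      then show ?thesis using gentop_in[OF RF[OF p] hty] by blast
    qed
  qed simp
  then show "t \<in> ?S" using ht by blast
qed




lemma lcmap_zip:
  assumes "\<forall>i<length Xs. is_type (ps ! i)" "length ps = length Xs"
  shows "lcmap (map_of (zip Xs ps))"
  unfolding lcmap_def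
proof (intro allI impI)
  fix Y U assume "map_of (zip Xs ps) Y = Some U"
  hence "(Y, U) \<in> set (zip Xs ps)" by (rule map_of_SomeD)
  hence "U \<in> set ps" by (rule set_zip_rightD)
  then obtain i where "i < length ps" "ps ! i = U" by (auto simp: in_set_conv_nth)
  then show "is_type U" using assms by auto
qed

lemma tsubst_open_ext:
  "s' Y = Some p \<Longrightarrow> (\<forall>X\<in>ftv b. s' X = m X) \<Longrightarrow> lcmap m \<Longrightarrow>
   tsubst s' (topen_at k (TFree Y) b) = topen_at k p (tsubst m b)"
proof (induction b arbitrary: k)
  case (TFree X)
  then show ?case by (cases "m X") (auto simp: lcmap_def)
qed auto

lemma fresh_tv_notin:
  "fresh_tv Xs ps b \<notin> set Xs" "fresh_tv Xs ps b \<notin> ftv b"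
proof -
  let ?S = "insert 0 (set Xs \<union> \<Union> (ftv ` set ps) \<union> ftv b)"
  have fin: "finite ?S" by simp
  have le: "X \<le> Max ?S" if "X \<in> set Xs \<union> ftv b" for X using that fin by (intro Max_ge) auto
  have f: "fresh_tv Xs ps b = Suc (Max ?S)" unfolding fresh_tv_def by simp
  show "fresh_tv Xs ps b \<notin> set Xs"
  proof
    assume h: "fresh_tv Xs ps b \<in> set Xs"
    have "fresh_tv Xs ps b \<le> Max ?S" by (rule le) (simp add: h)
    with f show False by simp
  qed
  show "fresh_tv Xs ps b \<notin> ftv b"
  proof
    assume h: "fresh_tv Xs ps b \<in> ftv b"
    have "fresh_tv Xs ps b \<le> Max ?S" by (rule le) (simp add: h)
    with f show False by simp
  qed
qed

lemma simsubst_ext: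
  assumes len: "length ps = length Xs" and Y: "Y \<notin> set Xs" "Y \<notin> ftv b"
    and lc: "lcmap (map_of (zip Xs ps))"
  shows "simsubst (Xs @ [Y]) (ps @ [p]) (topen_at 0 (TFree Y) b) = topen_at 0 p (simsubst Xs ps b)"
proof -
  let ?m = "map_of (zip Xs ps)"
  have e: "map_of (zip (Xs @ [Y]) (ps @ [p])) = map_of [(Y, p)] ++ ?m"
    using len by (simp add: zip_append map_of_append)
  have "fst ` set (zip Xs ps) = set Xs" using len by (metis map_fst_zip set_map)
  hence mY: "?m Y = None" using Y(1) by (simp add: map_of_eq_None_iff)
  have h1: "(map_of [(Y, p)] ++ ?m) Y = Some p" using mY by (simp add: map_add_def)
  have h2: "\<forall>X\<in>ftv b. (map_of [(Y, p)] ++ ?m) X = ?m X"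
    using Y(2) by (auto simp: map_add_def split: option.splits)
  show ?thesis unfolding simsubst_def e by (rule tsubst_open_ext[OF h1 h2 lc])
qed

lemma main_RC:
  "is_type phi \<Longrightarrow> distinct Xs \<Longrightarrow> ftv phi \<subseteq> set Xs \<Longrightarrow> length ps = length Xs \<Longrightarrow>
   length Rs = length Xs \<Longrightarrow> \<forall>i < length Xs. is_type (ps ! i) \<and> RC (ps ! i) (Rs ! i) \<Longrightarrow>
   RC (simsubst Xs ps phi) (RED phi Xs ps Rs)"
proof (induction "size phi" arbitrary: phi Xs ps Rs rule: less_induct)
  case less
  have lc: "lcmap (map_of (zip Xs ps))" using lcmap_zip less.prems(4,6) by auto
  have tsub: "is_type (simsubst Xs ps c)" if "is_type c" for c
    using lc_tsubst[OF that lc] by (simp add: simsubst_def)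
  show ?case
  proof (cases phi)
    case Top then show ?thesis using RC_Top by (simp add: simsubst_def)
  next
    case (TBound i) then show ?thesis using less.prems(1) by simp
  next
    case (TFree X)
    then have "X \<in> set Xs" using less.prems(3) by simp
    then obtain i where i: "i < length Xs" "Xs ! i = X" by (auto simp: in_set_conv_nth)
    have l1: "length Xs = length Rs" "i < length Rs" using less.prems(5) i by auto
    have l2: "length Xs = length ps" "i < length ps" using less.prems(4) i by auto
    have m1: "map_of (zip Xs Rs) X = Some (Rs ! i)"
      using map_of_zip_nth[OF l1(1) less.prems(2) l1(2)] i(2) by simp
    have m2: "map_of (zip Xs ps) X = Some (ps ! i)"
      using map_of_zip_nth[OF l2(1) less.prems(2) l2(2)] i(2) by simp
    have "RC (ps ! i) (Rs ! i)" using less.prems(6) i(1) by blast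
    then show ?thesis using TFree m1 m2 by (simp add: simsubst_def)
  next
    case (Prod a b)
    have sz: "size a < size phi" "size b < size phi" using Prod by auto
    have tp: "is_type a" "is_type b" using less.prems(1) Prod by auto
    have fv: "ftv a \<subseteq> set Xs" "ftv b \<subseteq> set Xs" using less.prems(3) Prod by auto
    have IHa: "RC (simsubst Xs ps a) (RED a Xs ps Rs)"
      by (rule less.hyps[OF sz(1) tp(1) less.prems(2) fv(1) less.prems(4-6)])
    have IHb: "RC (simsubst Xs ps b) (RED b Xs ps Rs)"
      by (rule less.hyps[OF sz(2) tp(2) less.prems(2) fv(2) less.prems(4-6)])
    have ta: "is_type (simsubst Xs ps a)" "is_type (simsubst Xs ps b)"
      using tsub tp by auto
    show ?thesis using RC_Prod[OF IHa IHb ta] Prod by (simp add: simsubst_def)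
  next
    case (Arr a b)
    have sz: "size a < size phi" "size b < size phi" using Arr by auto
    have tp: "is_type a" "is_type b" using less.prems(1) Arr by auto
    have fv: "ftv a \<subseteq> set Xs" "ftv b \<subseteq> set Xs" using less.prems(3) Arr by auto
    have IHa: "RC (simsubst Xs ps a) (RED a Xs ps Rs)"
      by (rule less.hyps[OF sz(1) tp(1) less.prems(2) fv(1) less.prems(4-6)])
    have IHb: "RC (simsubst Xs ps b) (RED b Xs ps Rs)"
      by (rule less.hyps[OF sz(2) tp(2) less.prems(2) fv(2) less.prems(4-6)])
    have ta: "is_type (simsubst Xs ps a)" "is_type (simsubst Xs ps b)"
      using tsub tp by auto
    show ?thesis using RC_Arr[OF IHa IHb ta] Arr by (simp add: simsubst_def)
  next
    case (All b)
    define Y where "Y = fresh_tv Xs ps b"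
    have Y: "Y \<notin> set Xs" "Y \<notin> ftv b" unfolding Y_def by (rule fresh_tv_notin)+
    have lb: "lc_ty_at (Suc 0) b" using less.prems(1) All by simp
    have tB: "is_type (All (simsubst Xs ps b))"
      using lc_tsubst[OF lb lc] by (simp add: simsubst_def)
    have RF: "RC (topen_at 0 p (simsubst Xs ps b)) (RED (topen_at 0 (TFree Y) b) (Xs @ [Y]) (ps @ [p]) (Rs @ [S]))"
      if p: "is_type p" "RC p S" for p S
    proof -
      have h1: "size (topen_at 0 (TFree Y) b) < size phi" using All by simp
      have h2: "is_type (topen_at 0 (TFree Y) b)" using lb by (auto intro: lc_topen2)
      have h3: "distinct (Xs @ [Y])" using less.prems(2) Y by simp
      have h4: "ftv (topen_at 0 (TFree Y) b) \<subseteq> set (Xs @ [Y])"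
        using ftv_topen2[of 0 "TFree Y" b] less.prems(3) All by auto
      have h5: "length (ps @ [p]) = length (Xs @ [Y])" "length (Rs @ [S]) = length (Xs @ [Y])"
        using less.prems(4,5) by auto
      have h6: "\<forall>i < length (Xs @ [Y]). is_type ((ps @ [p]) ! i) \<and> RC ((ps @ [p]) ! i) ((Rs @ [S]) ! i)"
      proof (intro allI impI)
        fix i assume "i < length (Xs @ [Y])"
        then consider "i < length Xs" | "i = length Xs" by fastforce
        then show "is_type ((ps @ [p]) ! i) \<and> RC ((ps @ [p]) ! i) ((Rs @ [S]) ! i)"
        proof cases
          case 1 then show ?thesis using less.prems(4,5,6) by (simp add: nth_append)
        next
          case 2 then show ?thesis using less.prems(4,5) p by (simp add: nth_append)
        qed
      qed
      have "RC (simsubst (Xs @ [Y]) (ps @ [p]) (topen_at 0 (TFree Y) b))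
          (RED (topen_at 0 (TFree Y) b) (Xs @ [Y]) (ps @ [p]) (Rs @ [S]))"
        by (rule less.hyps[OF h1 h2 h3 h4 h5 h6])
      then show ?thesis using simsubst_ext[OF less.prems(4) Y lc] by simp
    qed
    have "RC (All (simsubst Xs ps b))
      {t. has_ty t (All (simsubst Xs ps b)) \<and> (\<forall>p S. is_type p \<longrightarrow> RC p S \<longrightarrow>
         TApp t p \<in> RED (topen_at 0 (TFree Y) b) (Xs @ [Y]) (ps @ [p]) (Rs @ [S]))}"
      by (rule RC_All[OF tB RF])
    then show ?thesis using All by (simp add: simsubst_def Y_def)
  qed
qed

theorem mainTheorem13:
  fixes phi :: ty and Xs :: "nat list" and ps :: "ty list" and Rs :: "tm set list"
  assumes "is_type phi"
    and "distinct Xs"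
    and "ftv phi \<subseteq> set Xs"
    and "length ps = length Xs"
    and "length Rs = length Xs"
    and "\<forall>i < length Xs. is_type (ps ! i) \<and> RC (ps ! i) (Rs ! i)"
  shows "RC (simsubst Xs ps phi) (RED phi Xs ps Rs)"
  using main_RC assms by blast


end
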